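(* Let $G$ be a noncompact connected real semisimple Lie group with finite centre and $K$ a maximal compact subgroup. Suppose that $f,f'\in C_c(G)$. Then pointwise on $G$ \[\mathcal{A}(f*f')\le\mathcal{A}(f)*\mathcal{A}(f').\] Hence, if $\phi_\lambda$ is a positive-real-valued spherical function, then \[\int_G\mathcal{A}(f*f')(x)\,\phi_\lambda(x)\,dx\le\int_G\mathcal{A}(f)(y)\,\phi_\lambda(y)\,dy\times\int_G\mathcal{A}(f')(x)\,\phi_\lambda(x)\,dx.\]
   Context: $dx$ is Haar measure on $G$, $dk$ normalized Haar measure on $K$, and $(f*f')(x)=\int_G f(y)f'(y^{-1}x)\,dy$. For a continuous function $u$ on $G$, $\mathcal{A}u(x)=\left(\int_K\int_K|u(kxk')|^2\,dk\,dk'\right)^{1/2}$. A spherical function is a $K$-bi-invariant continuous function $\phi$ on $G$ with $\int_K\phi(xky)\,dk=\phi(x)\phi(y)$ for all $x,y\in G$. *)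

theory Defs
  imports "HOL-Analysis.Analysis"
begin

text \<open>The group G is modelled by a type 'g of class group_add (written additively;
  commutativity is NOT assumed), carrying a Hausdorff topology.  x + y is the
  group product xy, - x is the inverse, 0 the identity.\<close>

definition topological_group :: "('g::{group_add,t2_space}) itself \<Rightarrow> bool" where
  "topological_group TYPE('g) \<longleftrightarrow>
     continuous_on UNIV (\<lambda>p::'g \<times> 'g. fst p + snd p) \<and> continuous_on UNIV (uminus :: 'g \<Rightarrow> 'g)"

definition locally_compact_group :: "('g::{group_add,t2_space}) itself \<Rightarrow> bool" where
  "locally_compact_group TYPE('g) \<longleftrightarrow>
     topological_group TYPE('g) \<and> (\<forall>x::'g. \<exists>U C. open U \<and> compact C \<and> x \<in> U \<and> U \<subseteq> C)"

definition group_center :: "('g::group_add) set" where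
  "group_center = {z. \<forall>g. z + g = g + z}"

definition is_subgroup :: "('g::group_add) set \<Rightarrow> bool" where
  "is_subgroup H \<longleftrightarrow> 0 \<in> H \<and> (\<forall>x\<in>H. \<forall>y\<in>H. x + y \<in> H) \<and> (\<forall>x\<in>H. - x \<in> H)"

definition maximal_compact_subgroup :: "('g::{group_add,t2_space}) set \<Rightarrow> bool" where
  "maximal_compact_subgroup K \<longleftrightarrow> is_subgroup K \<and> compact K \<and>
     (\<forall>H. is_subgroup H \<and> compact H \<and> K \<subseteq> H \<longrightarrow> H = K)"

text \<open>Haar measure on G (a left invariant Radon measure on the Borel sets).  Since a
  semisimple Lie group is unimodular, the Haar measure is also right invariant.\<close>

definition haar_measure :: "('g::{group_add,t2_space}) measure \<Rightarrow> bool" where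
  "haar_measure \<mu> \<longleftrightarrow> sets \<mu> = sets borel \<and>
     (\<forall>g. \<forall>A\<in>sets borel. emeasure \<mu> ((\<lambda>x. g + x) ` A) = emeasure \<mu> A) \<and>
     (\<forall>C. compact C \<longrightarrow> emeasure \<mu> C < \<infinity>) \<and>
     (\<forall>U. open U \<and> U \<noteq> {} \<longrightarrow> emeasure \<mu> U > 0)"

definition unimodular_haar_measure :: "('g::{group_add,t2_space}) measure \<Rightarrow> bool" where
  "unimodular_haar_measure \<mu> \<longleftrightarrow> haar_measure \<mu> \<and>
     (\<forall>g. \<forall>A\<in>sets borel. emeasure \<mu> ((\<lambda>x. x + g) ` A) = emeasure \<mu> A)"

definition normalized_haar_on :: "('g::{group_add,t2_space}) set \<Rightarrow> 'g measure \<Rightarrow> bool" where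
  "normalized_haar_on K \<nu> \<longleftrightarrow> space \<nu> = K \<and> sets \<nu> = sets (restrict_space borel K) \<and>
     emeasure \<nu> K = 1 \<and>
     (\<forall>k\<in>K. \<forall>A\<in>sets \<nu>. emeasure \<nu> ((\<lambda>x. k + x) ` A) = emeasure \<nu> A) \<and>
     (\<forall>k\<in>K. \<forall>A\<in>sets \<nu>. emeasure \<nu> ((\<lambda>x. x + k) ` A) = emeasure \<nu> A)"

definition Cc :: "('g::{group_add,t2_space} \<Rightarrow> complex) set" where
  "Cc = {f. continuous_on UNIV f \<and> compact (closure {x. f x \<noteq> 0})}"

definition conv :: "'g::group_add measure \<Rightarrow> ('g \<Rightarrow> 'b::{real_normed_field,second_countable_topology}) \<Rightarrow> ('g \<Rightarrow> 'b) \<Rightarrow> 'g \<Rightarrow> 'b" where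
  "conv \<mu> f f' x = (\<integral>y. f y * f' (- y + x) \<partial>\<mu>)"

definition Aop :: "'g::group_add measure \<Rightarrow> ('g \<Rightarrow> complex) \<Rightarrow> 'g \<Rightarrow> real" where
  "Aop \<nu> u x = sqrt (\<integral>k. (\<integral>k'. (cmod (u (k + x + k')))\<^sup>2 \<partial>\<nu>) \<partial>\<nu>)"

definition spherical_function :: "'g::{group_add,t2_space} set \<Rightarrow> 'g measure \<Rightarrow> ('g \<Rightarrow> 'c::{real_normed_field,second_countable_topology}) \<Rightarrow> bool" where
  "spherical_function K \<nu> \<phi> \<longleftrightarrow> continuous_on UNIV \<phi> \<and>
     (\<forall>k\<in>K. \<forall>k'\<in>K. \<forall>x. \<phi> (k + x + k') = \<phi> x) \<and>
     (\<forall>x y. (\<integral>k. \<phi> (x + k + y) \<partial>\<nu>) = \<phi> x * \<phi> y)"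

end

theory Submission
  imports Defs
begin

lemma tg_cont_add:
  assumes tg: "topological_group TYPE('g::{group_add,t2_space})"
    and f: "continuous_on S (f :: 'a::topological_space \<Rightarrow> 'g)" and g: "continuous_on S g"
  shows "continuous_on S (\<lambda>x. f x + g x)"
proof -
  have "continuous_on UNIV (\<lambda>p::'g \<times> 'g. fst p + snd p)" using tg unfolding topological_group_def by blast
  moreover have "continuous_on S (\<lambda>x. (f x, g x))" using f g by (intro continuous_on_Pair)
  ultimately have "continuous_on S ((\<lambda>p::'g \<times> 'g. fst p + snd p) \<circ> (\<lambda>x. (f x, g x)))"
    by (metis continuous_on_compose continuous_on_subset subset_UNIV)
  then show ?thesis by (simp add: o_def)
qed

lemma tg_cont_minus:
  assumes tg: "topological_group TYPE('g::{group_add,t2_space})"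
    and f: "continuous_on S (f :: 'a::topological_space \<Rightarrow> 'g)"
  shows "continuous_on S (\<lambda>x. - f x)"
proof -
  have "continuous_on UNIV (uminus :: 'g \<Rightarrow> 'g)" using tg unfolding topological_group_def by blast
  then show ?thesis using continuous_on_compose2[OF _ f] by (metis subset_UNIV)
qed

definition conc :: "'a::t2_space measure \<Rightarrow> 'a set \<Rightarrow> bool" where
  "conc m C \<longleftrightarrow> finite_measure m \<and> sets m = sets borel \<and> compact C \<and> emeasure m (UNIV - C) = 0"

lemma conc_space: "conc m C \<Longrightarrow> space m = UNIV"
  unfolding conc_def using sets_eq_imp_space_eq[of m borel] by simp

lemma conc_AE: assumes "conc m C" shows "AE y in m. y \<in> C"
proof -
  have "closed C" using assms unfolding conc_def using compact_imp_closed by blast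
  then have "- C \<in> sets borel" by (intro borel_comp borel_closed)
  then have "UNIV - C \<in> sets m" using assms unfolding conc_def by (simp add: Compl_eq_Diff_UNIV)
  then have "UNIV - C \<in> null_sets m" using assms unfolding conc_def by (intro null_setsI) auto
  then show ?thesis by (rule AE_I') auto
qed

lemma conc_meas:
  assumes "conc m C" "continuous_on UNIV g"
  shows "g \<in> borel_measurable m"
proof -
  have "g \<in> borel_measurable borel" using assms(2) by (rule borel_measurable_continuous_onI)
  moreover have "sets m = sets borel" using assms(1) unfolding conc_def by blast
  ultimately show ?thesis using measurable_cong_sets[of m borel] by blast
qed

lemma conc_bounded:
  fixes g :: "'a::t2_space \<Rightarrow> 'c::real_normed_vector"
  assumes "compact C" "continuous_on UNIV g"
  shows "\<exists>B. \<forall>y\<in>C. norm (g y) \<le> B"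
proof -
  have "continuous_on C g" using assms(2) continuous_on_subset by blast
  then have "compact (g ` C)" using assms(1) by (rule compact_continuous_image)
  then have "bounded (g ` C)" by (rule compact_imp_bounded)
  then obtain B where "\<forall>x\<in>g ` C. norm x \<le> B" unfolding bounded_iff by (elim exE)
  then show ?thesis by auto
qed

lemma conc_integrable:
  fixes g :: "'a::t2_space \<Rightarrow> 'c::{banach,second_countable_topology}"
  assumes "conc m C" "continuous_on UNIV g"
  shows "integrable m g"
proof -
  interpret finite_measure m using assms(1) unfolding conc_def by blast
  obtain B where B: "\<forall>y\<in>C. norm (g y) \<le> B" using conc_bounded assms unfolding conc_def by blast
  show ?thesis
  proof (rule integrable_const_bound[where B=B])
    show "AE x in m. norm (g x) \<le> B" using conc_AE[OF assms(1)] B by auto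
    show "g \<in> borel_measurable m" using conc_meas assms by blast
  qed
qed

lemma conc_norm_bound:
  fixes g :: "'a::t2_space \<Rightarrow> 'c::{banach,second_countable_topology}"
  assumes "conc m C" "continuous_on UNIV g" "\<forall>y\<in>C. norm (g y) \<le> B"
  shows "norm (integral\<^sup>L m g) \<le> measure m UNIV * B"
proof -
  interpret finite_measure m using assms(1) unfolding conc_def by blast
  have "norm (integral\<^sup>L m g) \<le> (\<integral>x. norm (g x) \<partial>m)" by (rule integral_norm_bound)
  also have "\<dots> \<le> (\<integral>x. B \<partial>m)"
  proof (rule integral_mono_AE)
    show "integrable m (\<lambda>x. norm (g x))" using conc_integrable[OF assms(1,2)] by (rule integrable_norm)
    show "integrable m (\<lambda>x. B)" by (rule integrable_const)
    show "AE x in m. norm (g x) \<le> B" using conc_AE[OF assms(1)] assms(3) by (simp add: eventually_mono)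
  qed
  also have "\<dots> = measure m UNIV * B" using conc_space[OF assms(1)] by (simp add: lebesgue_integral_const)
  finally show ?thesis .
qed

lemma tube_unif:
  fixes G :: "'a::topological_space \<times> 'b::topological_space \<Rightarrow> 'c::metric_space"
  assumes G: "continuous_on UNIV G" and C: "compact C" and e: "e > 0"
  shows "\<exists>U. open U \<and> x0 \<in> U \<and> (\<forall>x\<in>U. \<forall>y\<in>C. dist (G (x,y)) (G (x0,y)) < e)"
proof -
  let ?h = "\<lambda>p. dist (G p) (G (x0, snd p))"
  have ch: "continuous_on UNIV ?h"
  proof (intro continuous_on_dist G)
    have "continuous_on UNIV (\<lambda>p::'a\<times>'b. (x0, snd p))" by (intro continuous_intros)
    then show "continuous_on UNIV (\<lambda>p::'a\<times>'b. G (x0, snd p))"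
      using G continuous_on_compose[of UNIV "\<lambda>p::'a\<times>'b. (x0, snd p)" G] continuous_on_subset by (auto simp: o_def)
  qed
  define W where "W = ?h -` {..<e}"
  have "open W" unfolding W_def using ch continuous_on_open_vimage[of UNIV ?h] by auto
  moreover have "{x0} \<times> C \<subseteq> W" unfolding W_def using e by auto
  ultimately obtain X0 where "x0 \<in> X0" "open X0" "X0 \<times> C \<subseteq> W" using Elementary_Topology.tube_lemma[OF C, of W x0] by blast
  then show ?thesis unfolding W_def by (intro exI[of _ X0]) auto
qed

lemma conc_cont_param:
  fixes G :: "'a::t2_space \<times> 'b::t2_space \<Rightarrow> 'c::{banach,second_countable_topology}"
  assumes m: "conc m C" and G: "continuous_on UNIV G"
  shows "continuous_on UNIV (\<lambda>x. \<integral>y. G (x,y) \<partial>m)"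
proof -
  interpret finite_measure m using assms(1) unfolding conc_def by blast
  have cy: "continuous_on UNIV (\<lambda>y. G (x, y))" for x
  proof -
    have "continuous_on UNIV (\<lambda>y::'b. (x, y))" by (intro continuous_intros)
    then show ?thesis using G continuous_on_compose[of UNIV "\<lambda>y::'b. (x, y)" G] continuous_on_subset by (auto simp: o_def)
  qed
  have "isCont (\<lambda>x. \<integral>y. G (x,y) \<partial>m) x0" for x0
    unfolding isCont_def tendsto_iff
  proof (intro allI impI)
    fix e :: real assume e: "e > 0"
    define M where "M = measure m UNIV + 1"
    have M: "M > 0" unfolding M_def by (simp add: measure_nonneg add_nonneg_pos)
    obtain U where U: "open U" "x0 \<in> U" "\<forall>x\<in>U. \<forall>y\<in>C. dist (G (x,y)) (G (x0,y)) < e / (2*M)"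
      using tube_unif[OF G, of C "e/(2*M)" x0] m e M unfolding conc_def by auto
    have "dist (\<integral>y. G (x,y) \<partial>m) (\<integral>y. G (x0,y) \<partial>m) < e" if "x \<in> U" for x
    proof -
      have "dist (\<integral>y. G (x,y) \<partial>m) (\<integral>y. G (x0,y) \<partial>m) = norm (\<integral>y. G (x,y) - G (x0,y) \<partial>m)"
        using conc_integrable[OF m cy] by (simp add: dist_norm)
      also have "\<dots> \<le> measure m UNIV * (e/(2*M))"
      proof (rule conc_norm_bound[OF m])
        show "continuous_on UNIV (\<lambda>y. G (x,y) - G (x0,y))" by (intro continuous_on_diff cy)
        show "\<forall>y\<in>C. norm (G (x,y) - G (x0,y)) \<le> e/(2*M)" using U that by (auto simp: dist_norm intro: less_imp_le)
      qed
      also have "\<dots> < e"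
      proof -
        have "measure m UNIV < M" unfolding M_def by simp
        then have "measure m UNIV * (e/(2*M)) < M * (e/(2*M))" using M e by (intro mult_strict_right_mono) auto
        also have "\<dots> = e/2" using M by simp
        finally show ?thesis using e by simp
      qed
      finally show ?thesis .
    qed
    then show "\<forall>\<^sub>F x in at x0. dist (\<integral>y. G (x,y) \<partial>m) (\<integral>y. G (x0,y) \<partial>m) < e"
      unfolding eventually_at_topological using U by blast
  qed
  then show ?thesis by (simp add: continuous_on_eq_continuous_at)
qed

lemma Hausdorff_euclidean_t2: "Hausdorff_space (euclidean :: 'a::t2_space topology)"
  unfolding Hausdorff_space_def using hausdorff by (fastforce simp: disjnt_def)

lemma compact_sep_fun:
  fixes S :: "'a::t2_space set"
  assumes S: "compact S" and x: "x \<in> S" "y \<in> S" "x \<noteq> y"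
  shows "\<exists>u. continuous_on S u \<and> u x \<noteq> (u y :: real)"
proof -
  let ?X = "top_of_set S"
  have "compact_space ?X" using S by (intro compact_space_subtopology) simp
  moreover have "Hausdorff_space ?X" by (intro Hausdorff_space_subtopology Hausdorff_euclidean_t2)
  ultimately have N: "normal_space ?X" using compact_Hausdorff_or_regular_imp_normal_space by blast
  have "closedin ?X (S \<inter> {x})" by (intro closedin_closed_Int) simp
  moreover have "closedin ?X (S \<inter> {y})" by (intro closedin_closed_Int) simp
  moreover have "disjnt (S \<inter> {x}) (S \<inter> {y})" using x by (auto simp: disjnt_def)
  ultimately obtain f where f: "continuous_map ?X euclideanreal f" "f ` (S \<inter> {x}) \<subseteq> {0}" "f ` (S \<inter> {y}) \<subseteq> {1}"
    using Urysohn_lemma_alt[OF N, of "S \<inter> {x}" "S \<inter> {y}" 0 1] by blast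
  then show ?thesis using x by (intro exI[of _ f]) auto
qed

lemma prod_meas:
  fixes G :: "'a::t2_space \<times> 'b::t2_space \<Rightarrow> real"
  assumes G: "continuous_on UNIV G" and S: "compact S" and T: "compact T"
  shows "(\<lambda>p. indicator (S \<times> T) p * G p) \<in> borel_measurable (borel \<Otimes>\<^sub>M borel)"
proof -
  define R :: "('a \<times> 'b \<Rightarrow> real) set" where "R = {h. continuous_on (S \<times> T) h \<and>
     (\<lambda>p. indicator (S \<times> T) p * h p) \<in> borel_measurable (borel \<Otimes>\<^sub>M borel)}"
  have Sb: "S \<in> sets borel" using S by (simp add: borel_closed compact_imp_closed)
  have Tb: "T \<in> sets borel" using T by (simp add: borel_closed compact_imp_closed)
  have STm: "S \<times> T \<in> sets (borel \<Otimes>\<^sub>M borel)" using Sb Tb by (rule pair_measureI)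
  have ind: "(\<lambda>p. indicator (S \<times> T) p :: real) \<in> borel_measurable (borel \<Otimes>\<^sub>M borel)"
    using STm by (rule borel_measurable_indicator)
  interpret PR: function_ring_on R "S \<times> T"
  proof unfold_locales
    show "compact (S \<times> T)" using S T by (rule compact_Times)
    show "continuous_on (S \<times> T) f" if "f \<in> R" for f using that unfolding R_def by blast
    show "(\<lambda>x. f x + g x) \<in> R" if "f \<in> R" "g \<in> R" for f g
    proof -
      have "(\<lambda>p. indicator (S \<times> T) p * f p + indicator (S \<times> T) p * g p) \<in> borel_measurable (borel \<Otimes>\<^sub>M borel)"
        using that unfolding R_def by (auto intro: borel_measurable_add)
      moreover have "continuous_on (S \<times> T) (\<lambda>x. f x + g x)" using that unfolding R_def by (intro continuous_on_add) auto
      ultimately show ?thesis unfolding R_def by (simp add: distrib_left)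
    qed
    show "(\<lambda>x. f x * g x) \<in> R" if "f \<in> R" "g \<in> R" for f g
    proof -
      have "(\<lambda>p. (indicator (S \<times> T) p * f p) * (indicator (S \<times> T) p * g p)) \<in> borel_measurable (borel \<Otimes>\<^sub>M borel)"
        using that unfolding R_def by (auto intro: borel_measurable_times)
      moreover have "(\<lambda>p. (indicator (S \<times> T) p * f p) * (indicator (S \<times> T) p * g p)) = (\<lambda>p. indicator (S \<times> T) p * (f p * g p))"
        by (auto simp: indicator_def)
      moreover have "continuous_on (S \<times> T) (\<lambda>x. f x * g x)" using that unfolding R_def by (intro continuous_on_mult) auto
      ultimately show ?thesis unfolding R_def by simp
    qed
    show "(\<lambda>_. c) \<in> R" for c
      unfolding R_def using ind by (auto intro!: borel_measurable_times)
    show "\<exists>f\<in>R. f x \<noteq> f y" if xy: "x \<in> S \<times> T" "y \<in> S \<times> T" "x \<noteq> y" for x y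
    proof (cases "fst x = fst y")
      case False
      have "fst x \<in> S" "fst y \<in> S" using xy by (auto simp: mem_Times_iff)
      then obtain u :: "'a \<Rightarrow> real" where u: "continuous_on S u" "u (fst x) \<noteq> u (fst y)"
        using compact_sep_fun[OF S _ _ False] by blast
      have um: "(\<lambda>z. indicator S z *\<^sub>R u z) \<in> borel_measurable borel"
        using Sb u(1) by (rule borel_measurable_continuous_on_indicator)
      have "(\<lambda>p. (indicator S (fst p) *\<^sub>R u (fst p)) * indicator T (snd p)) \<in> borel_measurable (borel \<Otimes>\<^sub>M borel)"
        using um Tb by measurable
      moreover have "(\<lambda>p. (indicator S (fst p) *\<^sub>R u (fst p)) * indicator T (snd p)) = (\<lambda>p. indicator (S \<times> T) p * u (fst p))"
        by (auto simp: indicator_def fun_eq_iff)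
      moreover have "continuous_on (S \<times> T) (\<lambda>p. u (fst p))"
        by (rule continuous_on_compose2[OF u(1) continuous_on_fst[OF continuous_on_id]]) auto
      ultimately show ?thesis using u unfolding R_def by (intro bexI[of _ "\<lambda>p. u (fst p)"]) auto
    next
      case True
      then have ne: "snd x \<noteq> snd y" using xy by (simp add: prod_eq_iff)
      have "snd x \<in> T" "snd y \<in> T" using xy by (auto simp: mem_Times_iff)
      then obtain u :: "'b \<Rightarrow> real" where u: "continuous_on T u" "u (snd x) \<noteq> u (snd y)"
        using compact_sep_fun[OF T _ _ ne] by blast
      have um: "(\<lambda>z. indicator T z *\<^sub>R u z) \<in> borel_measurable borel"
        using Tb u(1) by (rule borel_measurable_continuous_on_indicator)
      have "(\<lambda>p. indicator S (fst p) * (indicator T (snd p) *\<^sub>R u (snd p))) \<in> borel_measurable (borel \<Otimes>\<^sub>M borel)"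
        using um Sb by measurable
      moreover have "(\<lambda>p. indicator S (fst p) * (indicator T (snd p) *\<^sub>R u (snd p))) = (\<lambda>p. indicator (S \<times> T) p * u (snd p))"
        by (auto simp: indicator_def fun_eq_iff)
      moreover have "continuous_on (S \<times> T) (\<lambda>p. u (snd p))"
        by (rule continuous_on_compose2[OF u(1) continuous_on_snd[OF continuous_on_id]]) auto
      ultimately show ?thesis using u unfolding R_def by (intro bexI[of _ "\<lambda>p. u (snd p)"]) auto
    qed
  qed
  have cG: "continuous_on (S \<times> T) G" using G continuous_on_subset by blast
  have "\<exists>g\<in>R. \<forall>x\<in>S \<times> T. \<bar>G x - g x\<bar> < 1 / (Suc n)" for n
    using PR.Stone_Weierstrass_basic[OF cG, of "1 / Suc n"] by simp
  then obtain g where g: "\<And>n. g n \<in> R" "\<And>n x. x \<in> S \<times> T \<Longrightarrow> \<bar>G x - g n x\<bar> < 1 / Suc n"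
    by metis
  show ?thesis
  proof (rule borel_measurable_LIMSEQ_real)
    show "(\<lambda>p. indicator (S \<times> T) p * g n p) \<in> borel_measurable (borel \<Otimes>\<^sub>M borel)" for n
      using g(1)[of n] unfolding R_def by blast
    show "(\<lambda>n. indicator (S \<times> T) p * g n p) \<longlonglongrightarrow> indicator (S \<times> T) p * G p" for p
    proof (cases "p \<in> S \<times> T")
      case True
      have "(\<lambda>n. g n p) \<longlonglongrightarrow> G p"
      proof (rule LIMSEQ_I)
        fix r :: real assume r: "r > 0"
        obtain N where N: "1 / Suc N < r" using r by (meson nat_approx_posE)
        have "norm (g n p - G p) < r" if "n \<ge> N" for n
        proof -
          have "1 / real (Suc n) \<le> 1 / Suc N" using that by (intro divide_left_mono) auto
          then show ?thesis using g(2)[OF True, of n] N by (simp add: abs_minus_commute)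
        qed
        then show "\<exists>no. \<forall>n\<ge>no. norm (g n p - G p) < r" by blast
      qed
      then show ?thesis using True by simp
    next
      case False
      then show ?thesis by simp
    qed
  qed
qed

lemma conc_meas_borel: "conc m C \<Longrightarrow> f \<in> borel_measurable borel \<Longrightarrow> f \<in> borel_measurable m"
  unfolding conc_def using measurable_cong_sets[of m borel] by blast

lemma conc_cong:
  fixes f g :: "'a::t2_space \<Rightarrow> 'c::{banach,second_countable_topology}"
  assumes m: "conc m C" and f: "f \<in> borel_measurable borel" and g: "g \<in> borel_measurable borel"
    and eq: "\<And>x. x \<in> C \<Longrightarrow> f x = g x"
  shows "integral\<^sup>L m f = integral\<^sup>L m g"
proof (rule integral_cong_AE)
  show "f \<in> borel_measurable m" "g \<in> borel_measurable m" using conc_meas_borel[OF m] f g by auto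
  show "AE x in m. f x = g x" using conc_AE[OF m] eq by (simp add: eventually_mono)
qed

lemma conc_finite: "conc m C \<Longrightarrow> finite_measure m"
  unfolding conc_def by blast

lemma conc_compact: "conc m C \<Longrightarrow> compact C"
  unfolding conc_def by blast

lemma conc_borel: "conc m C \<Longrightarrow> C \<in> sets borel"
  unfolding conc_def by (simp add: borel_closed compact_imp_closed)

lemma cont_Pair_left: "continuous_on UNIV G \<Longrightarrow> continuous_on UNIV (\<lambda>y. G (x, y))"
proof -
  assume G: "continuous_on UNIV G"
  have "continuous_on UNIV (\<lambda>y. (x, y))" by (intro continuous_intros)
  then show ?thesis using G continuous_on_compose2 by (metis subset_UNIV)
qed

lemma cont_Pair_right: "continuous_on UNIV G \<Longrightarrow> continuous_on UNIV (\<lambda>x. G (x, y))"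
proof -
  assume G: "continuous_on UNIV G"
  have "continuous_on UNIV (\<lambda>x. (x, y))" by (intro continuous_intros)
  then show ?thesis using G continuous_on_compose2 by (metis subset_UNIV)
qed

lemma conc_fubini:
  fixes G :: "'a::t2_space \<times> 'b::t2_space \<Rightarrow> real"
  assumes m1: "conc m1 S" and m2: "conc m2 T" and G: "continuous_on UNIV G"
  shows "(\<integral>x. \<integral>y. G (x,y) \<partial>m2 \<partial>m1) = (\<integral>y. \<integral>x. G (x,y) \<partial>m1 \<partial>m2)"
proof -
  interpret M1: finite_measure m1 using conc_finite[OF m1] .
  interpret M2: finite_measure m2 using conc_finite[OF m2] .
  interpret P: pair_sigma_finite m1 m2 by unfold_locales
  interpret PF: finite_measure "m1 \<Otimes>\<^sub>M m2" by (rule finite_measure_pair_measure) unfold_locales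
  define G' where "G' = (\<lambda>p. indicator (S \<times> T) p * G p)"
  have S: "compact S" and T: "compact T" using m1 m2 by (auto dest: conc_compact)
  have Sb: "S \<in> sets borel" and Tb: "T \<in> sets borel" using m1 m2 by (auto dest: conc_borel)
  have s1: "sets m1 = sets borel" and s2: "sets m2 = sets borel" using m1 m2 unfolding conc_def by auto
  have "G' \<in> borel_measurable (borel \<Otimes>\<^sub>M borel)" unfolding G'_def by (rule prod_meas[OF G S T])
  then have Gm: "G' \<in> borel_measurable (m1 \<Otimes>\<^sub>M m2)"
    using measurable_cong_sets[OF sets_pair_measure_cong[OF s1 s2] refl] by blast
  obtain B where B: "\<forall>p\<in>S \<times> T. norm (G p) \<le> B" using conc_bounded[OF compact_Times[OF S T] G] by blast
  have "integrable (m1 \<Otimes>\<^sub>M m2) G'"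
  proof (rule PF.integrable_const_bound[where B="max B 0"])
    have "norm (G' p) \<le> max B 0" for p
    proof (cases "p \<in> S \<times> T")
      case True then have "norm (G p) \<le> B" using B by blast
      then show ?thesis using True unfolding G'_def by simp
    qed (simp add: G'_def)
    then show "AE p in m1 \<Otimes>\<^sub>M m2. norm (G' p) \<le> max B 0" by (intro AE_I2)
  qed (rule Gm)
  then have "(\<integral>y. \<integral>x. G' (x,y) \<partial>m1 \<partial>m2) = (\<integral>x. \<integral>y. G' (x,y) \<partial>m2 \<partial>m1)"
    using P.Fubini_integral[of "\<lambda>x y. G' (x,y)"] by simp
  moreover have "(\<integral>y. G' (x,y) \<partial>m2) = indicator S x * (\<integral>y. G (x,y) \<partial>m2)" for x
  proof -
    have "(\<integral>y. G' (x,y) \<partial>m2) = (\<integral>y. indicator S x * G (x,y) \<partial>m2)"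
    proof (rule conc_cong[OF m2])
      have "(\<lambda>y. indicator T y * G (x,y)) \<in> borel_measurable borel"
        using Tb cont_Pair_left[OF G] by (intro borel_measurable_times borel_measurable_indicator borel_measurable_continuous_onI)
      then show "(\<lambda>y. G' (x, y)) \<in> borel_measurable borel"
        unfolding G'_def by (simp add: indicator_times mult.assoc) 
      show "(\<lambda>y. indicator S x * G (x, y)) \<in> borel_measurable borel"
        using cont_Pair_left[OF G] by (intro borel_measurable_times borel_measurable_const borel_measurable_continuous_onI)
    qed (auto simp: G'_def indicator_def)
    then show ?thesis by simp
  qed
  moreover have "(\<integral>x. G' (x,y) \<partial>m1) = indicator T y * (\<integral>x. G (x,y) \<partial>m1)" for y
  proof -
    have "(\<integral>x. G' (x,y) \<partial>m1) = (\<integral>x. indicator T y * G (x,y) \<partial>m1)"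
    proof (rule conc_cong[OF m1])
      have "(\<lambda>x. indicator S x * G (x,y)) \<in> borel_measurable borel"
        using Sb cont_Pair_right[OF G] by (intro borel_measurable_times borel_measurable_indicator borel_measurable_continuous_onI)
      then have "(\<lambda>x. indicator T y * (indicator S x * G (x,y))) \<in> borel_measurable borel"
        by (rule borel_measurable_times[OF borel_measurable_const])
      then show "(\<lambda>x. G' (x, y)) \<in> borel_measurable borel"
        unfolding G'_def by (simp add: indicator_times mult_ac) 
      show "(\<lambda>x. indicator T y * G (x, y)) \<in> borel_measurable borel"
        using cont_Pair_right[OF G] by (intro borel_measurable_times borel_measurable_const borel_measurable_continuous_onI)
    qed (auto simp: G'_def indicator_def)
    then show ?thesis by simp
  qed
  moreover have "(\<integral>x. indicator S x * (\<integral>y. G (x,y) \<partial>m2) \<partial>m1) = (\<integral>x. (\<integral>y. G (x,y) \<partial>m2) \<partial>m1)"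
  proof (rule conc_cong[OF m1])
    have c: "continuous_on UNIV (\<lambda>x. \<integral>y. G (x,y) \<partial>m2)" by (rule conc_cont_param[OF m2 G])
    show "(\<lambda>x. indicator S x * (\<integral>y. G (x,y) \<partial>m2)) \<in> borel_measurable borel"
      using Sb c by (intro borel_measurable_times borel_measurable_indicator borel_measurable_continuous_onI)
    show "(\<lambda>x. (\<integral>y. G (x,y) \<partial>m2)) \<in> borel_measurable borel"
      using c by (intro borel_measurable_continuous_onI)
  qed simp
  moreover have "(\<integral>y. indicator T y * (\<integral>x. G (x,y) \<partial>m1) \<partial>m2) = (\<integral>y. (\<integral>x. G (x,y) \<partial>m1) \<partial>m2)"
  proof (rule conc_cong[OF m2])
    have "continuous_on UNIV (\<lambda>q::'b\<times>'a. (snd q, fst q))" by (intro continuous_intros)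
    then have "continuous_on UNIV (\<lambda>q::'b\<times>'a. G (snd q, fst q))"
      using continuous_on_compose2[OF G] by blast
    then have c: "continuous_on UNIV (\<lambda>y. \<integral>x. G (x,y) \<partial>m1)" using conc_cont_param[OF m1, of "\<lambda>q. G (snd q, fst q)"] by simp
    show "(\<lambda>y. indicator T y * (\<integral>x. G (x,y) \<partial>m1)) \<in> borel_measurable borel"
      using Tb c by (intro borel_measurable_times borel_measurable_indicator borel_measurable_continuous_onI)
    show "(\<lambda>y. (\<integral>x. G (x,y) \<partial>m1)) \<in> borel_measurable borel"
      using c by (intro borel_measurable_continuous_onI)
  qed simp
  ultimately show ?thesis by simp
qed

lemma quad_disc:
  fixes A B C :: real
  assumes A: "A \<ge> 0" and B: "B \<ge> 0" and q: "\<And>t. t^2 * A - 2 * t * C + B \<ge> 0"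
  shows "C \<le> sqrt A * sqrt B"
proof (cases "A = 0")
  case True
  show ?thesis
  proof (rule ccontr)
    assume "\<not> ?thesis"
    then have C: "C > 0" using True by simp
    have "-2 * ((B+1)/(2*C)) * C = -(B+1)" using C by (simp add: field_simps)
    then have "-2 * ((B+1)/(2*C)) * C + B < 0" by linarith
    moreover have "((B+1)/(2*C))^2 * A = 0" using True by simp
    ultimately show False using q[of "(B+1)/(2*C)"] by linarith
  qed
next
  case False
  then have A': "A > 0" using A by simp
  have "(C/A)^2 * A - 2 * (C/A) * C + B \<ge> 0" by (rule q)
  then have "C^2/A - 2 * C^2/A + B \<ge> 0" using A' by (simp add: power2_eq_square field_simps)
  then have "C^2 \<le> A * B" using A' by (simp add: field_simps)
  then have "\<bar>C\<bar> \<le> sqrt (A * B)" using real_sqrt_le_mono[of "C^2" "A*B"] by simp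
  then show ?thesis by (simp add: real_sqrt_mult)
qed

lemma integral_CS:
  fixes f g :: "'a \<Rightarrow> real"
  assumes f2: "integrable M (\<lambda>x. f x ^ 2)" and g2: "integrable M (\<lambda>x. g x ^ 2)"
    and fg: "integrable M (\<lambda>x. f x * g x)"
  shows "(\<integral>x. f x * g x \<partial>M) \<le> sqrt (\<integral>x. f x ^ 2 \<partial>M) * sqrt (\<integral>x. g x ^ 2 \<partial>M)"
proof (rule quad_disc)
  show "0 \<le> (\<integral>x. f x ^ 2 \<partial>M)" "0 \<le> (\<integral>x. g x ^ 2 \<partial>M)" by (auto intro: integral_nonneg_AE)
  fix t :: real
  have "0 \<le> (\<integral>x. (t * f x - g x)^2 \<partial>M)" by (auto intro: integral_nonneg_AE)
  also have "(\<integral>x. (t * f x - g x)^2 \<partial>M) = (\<integral>x. t^2 * f x ^ 2 - 2 * t * (f x * g x) + g x ^ 2 \<partial>M)"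
    by (simp add: power2_eq_square algebra_simps)
  also have "\<dots> = t^2 * (\<integral>x. f x ^ 2 \<partial>M) - 2 * t * (\<integral>x. f x * g x \<partial>M) + (\<integral>x. g x ^ 2 \<partial>M)"
    using f2 g2 fg by simp
  finally show "0 \<le> t^2 * (\<integral>x. f x ^ 2 \<partial>M) - 2 * t * (\<integral>x. f x * g x \<partial>M) + (\<integral>x. g x ^ 2 \<partial>M)" .
qed

locale gsetting =
  fixes \<mu> \<nu> :: "'g::{group_add,t2_space} measure" and K :: "'g set"
  assumes tg: "topological_group TYPE('g)"
    and Ksub: "is_subgroup K" and Kc: "compact K"
    and haar: "unimodular_haar_measure \<mu>"
    and haarK: "normalized_haar_on K \<nu>"
begin

definition N where "N = distr \<nu> borel (\<lambda>x. x)"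

lemma K0: "0 \<in> K" and Kadd: "a \<in> K \<Longrightarrow> b \<in> K \<Longrightarrow> a + b \<in> K" and Kneg: "a \<in> K \<Longrightarrow> - a \<in> K"
  using Ksub unfolding is_subgroup_def by auto

lemma Kb: "K \<in> sets borel" using Kc by (simp add: borel_closed compact_imp_closed)

lemma nu_space: "space \<nu> = K" and nu_sets: "sets \<nu> = sets (restrict_space borel K)"
  and nu_K: "emeasure \<nu> K = 1"
  and nu_left: "\<And>k A. k \<in> K \<Longrightarrow> A \<in> sets \<nu> \<Longrightarrow> emeasure \<nu> ((\<lambda>x. k + x) ` A) = emeasure \<nu> A"
  and nu_right: "\<And>k A. k \<in> K \<Longrightarrow> A \<in> sets \<nu> \<Longrightarrow> emeasure \<nu> ((\<lambda>x. x + k) ` A) = emeasure \<nu> A"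
  using haarK unfolding normalized_haar_on_def by auto

lemma id_meas: "(\<lambda>x. x) \<in> measurable \<nu> borel"
proof -
  have "(\<lambda>x. x) \<in> measurable (restrict_space borel K) borel"
    by (rule measurable_restrict_space1) simp
  then show ?thesis using measurable_cong_sets[OF nu_sets refl] by blast
qed

lemma borel_to_nu: "g \<in> borel_measurable borel \<Longrightarrow> g \<in> borel_measurable \<nu>"
  using measurable_compose[OF id_meas] by auto

lemma N_sets: "sets N = sets borel" unfolding N_def by simp

lemma N_emeasure: "A \<in> sets borel \<Longrightarrow> emeasure N A = emeasure \<nu> (A \<inter> K)"
  unfolding N_def using emeasure_distr[OF id_meas] nu_space by simp

lemma N_conc: "conc N K"
  unfolding conc_def
proof (intro conjI)
  show "sets N = sets borel" by (rule N_sets)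
  show "compact K" by (rule Kc)
  have "-K \<in> sets borel" using Kb by (rule borel_comp)
  moreover have "(UNIV - K) \<inter> K = {}" by auto
  ultimately show "emeasure N (UNIV - K) = 0" using N_emeasure[of "UNIV - K"] by (simp add: Compl_eq_Diff_UNIV)
  have "space N = UNIV" using N_sets by (metis sets_eq_imp_space_eq space_borel)
  then show "finite_measure N" using N_emeasure[of UNIV] nu_K by (intro finite_measureI) auto
qed

lemma N_int:
  fixes g :: "'g \<Rightarrow> 'c::{banach,second_countable_topology}"
  assumes g: "g \<in> borel_measurable borel"
  shows "integral\<^sup>L \<nu> g = integral\<^sup>L N g"
proof -
  have "integral\<^sup>L (distr \<nu> borel (\<lambda>x. x)) g = (\<integral>x. g x \<partial>\<nu>)" by (rule integral_distr[OF id_meas g])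
  then show ?thesis unfolding N_def by simp
qed

lemma N_measure_UNIV: "measure N UNIV = 1"
  using N_emeasure[of UNIV] nu_K by (simp add: measure_def)

lemma N_space: "space N = UNIV" using N_sets by (metis sets_eq_imp_space_eq space_borel)

lemma N_measure_space[simp]: "measure N (space N) = 1"
  using N_space N_measure_UNIV by simp

lemma N_const: "(\<integral>x. c \<partial>N) = (c::'c::{banach,second_countable_topology})"
proof -
  have "space N = UNIV" using N_sets by (metis sets_eq_imp_space_eq space_borel)
  then show ?thesis using N_measure_UNIV by simp
qed

lemma cont_add: "continuous_on S f \<Longrightarrow> continuous_on S g \<Longrightarrow> continuous_on S (\<lambda>x. f x + g x :: 'g)"
  by (rule tg_cont_add[OF tg])

lemma cont_minus: "continuous_on S f \<Longrightarrow> continuous_on S (\<lambda>x. - f x :: 'g)"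
  by (rule tg_cont_minus[OF tg])

lemma left_meas: "(\<lambda>x::'g. a + x) \<in> borel_measurable borel"
  by (intro borel_measurable_continuous_onI cont_add continuous_on_const continuous_on_id)

lemma right_meas: "(\<lambda>x::'g. x + a) \<in> borel_measurable borel"
  by (intro borel_measurable_continuous_onI cont_add continuous_on_const continuous_on_id)

lemma N_left_distr:
  assumes k: "k \<in> K" shows "distr N borel (\<lambda>x. k + x) = N"
proof (rule measure_eqI)
  show "sets (distr N borel (\<lambda>x. k + x)) = sets N" using N_sets by simp
  fix A assume "A \<in> sets (distr N borel (\<lambda>x. k + x))"
  then have A: "A \<in> sets borel" by simp
  have m: "(\<lambda>x. k + x) \<in> measurable N borel" using left_meas measurable_cong_sets[OF N_sets refl] by blast
  have sN: "space N = UNIV" using N_sets by (metis sets_eq_imp_space_eq space_borel)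
  have pre: "(\<lambda>x. k + x) -` A \<in> sets borel" using left_meas[of k] A by (simp add: measurable_sets_borel)
  have eq: "(\<lambda>x. k + x) -` A \<inter> K = (\<lambda>x. - k + x) ` (A \<inter> K)"
  proof
    show "(\<lambda>x. k + x) -` A \<inter> K \<subseteq> (\<lambda>x. - k + x) ` (A \<inter> K)"
    proof
      fix x assume x: "x \<in> (\<lambda>x. k + x) -` A \<inter> K"
      then have "k + x \<in> A \<inter> K" using Kadd[OF k] by auto
      moreover have "x = - k + (k + x)" by (simp add: add.assoc[symmetric])
      ultimately show "x \<in> (\<lambda>x. - k + x) ` (A \<inter> K)" by blast
    qed
    show "(\<lambda>x. - k + x) ` (A \<inter> K) \<subseteq> (\<lambda>x. k + x) -` A \<inter> K"
      using Kadd[OF Kneg[OF k]] by (auto simp: add.assoc[symmetric])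
  qed
  have AK: "A \<inter> K \<in> sets \<nu>" using A nu_sets by (auto simp: sets_restrict_space)
  have "emeasure (distr N borel (\<lambda>x. k + x)) A = emeasure N ((\<lambda>x. k + x) -` A)"
    using emeasure_distr[OF m A] sN by simp
  also have "\<dots> = emeasure \<nu> ((\<lambda>x. k + x) -` A \<inter> K)" using N_emeasure[OF pre] .
  also have "\<dots> = emeasure \<nu> (A \<inter> K)" unfolding eq using nu_left[OF Kneg[OF k] AK] .
  also have "\<dots> = emeasure N A" using N_emeasure[OF A] by simp
  finally show "emeasure (distr N borel (\<lambda>x. k + x)) A = emeasure N A" .
qed

lemma N_right_distr:
  assumes k: "k \<in> K" shows "distr N borel (\<lambda>x. x + k) = N"
proof (rule measure_eqI)
  show "sets (distr N borel (\<lambda>x. x + k)) = sets N" using N_sets by simp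
  fix A assume "A \<in> sets (distr N borel (\<lambda>x. x + k))"
  then have A: "A \<in> sets borel" by simp
  have m: "(\<lambda>x. x + k) \<in> measurable N borel" using right_meas measurable_cong_sets[OF N_sets refl] by blast
  have sN: "space N = UNIV" using N_sets by (metis sets_eq_imp_space_eq space_borel)
  have pre: "(\<lambda>x. x + k) -` A \<in> sets borel" using right_meas[of k] A by (simp add: measurable_sets_borel)
  have eq: "(\<lambda>x. x + k) -` A \<inter> K = (\<lambda>x. x + - k) ` (A \<inter> K)"
  proof
    show "(\<lambda>x. x + k) -` A \<inter> K \<subseteq> (\<lambda>x. x + - k) ` (A \<inter> K)"
    proof
      fix x assume x: "x \<in> (\<lambda>x. x + k) -` A \<inter> K"
      then have "x + k \<in> A \<inter> K" using Kadd[OF _ k] by auto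
      moreover have "x = (x + k) + - k" by (simp add: add.assoc)
      ultimately show "x \<in> (\<lambda>x. x + - k) ` (A \<inter> K)" by blast
    qed
    show "(\<lambda>x. x + - k) ` (A \<inter> K) \<subseteq> (\<lambda>x. x + k) -` A \<inter> K"
      using Kadd[OF _ Kneg[OF k]] by (auto simp: add.assoc)
  qed
  have AK: "A \<inter> K \<in> sets \<nu>" using A nu_sets by (auto simp: sets_restrict_space)
  have "emeasure (distr N borel (\<lambda>x. x + k)) A = emeasure N ((\<lambda>x. x + k) -` A)"
    using emeasure_distr[OF m A] sN by simp
  also have "\<dots> = emeasure \<nu> ((\<lambda>x. x + k) -` A \<inter> K)" using N_emeasure[OF pre] .
  also have "\<dots> = emeasure \<nu> (A \<inter> K)" unfolding eq using nu_right[OF Kneg[OF k] AK] .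
  also have "\<dots> = emeasure N A" using N_emeasure[OF A] by simp
  finally show "emeasure (distr N borel (\<lambda>x. x + k)) A = emeasure N A" .
qed

lemma N_left:
  fixes g :: "'g \<Rightarrow> 'c::{banach,second_countable_topology}"
  assumes k: "k \<in> K" and g: "g \<in> borel_measurable borel"
  shows "(\<integral>x. g (k + x) \<partial>N) = integral\<^sup>L N g"
proof -
  have m: "(\<lambda>x. k + x) \<in> measurable N borel" using left_meas measurable_cong_sets[OF N_sets refl] by blast
  have "integral\<^sup>L N g = integral\<^sup>L (distr N borel (\<lambda>x. k + x)) g" using N_left_distr[OF k] by simp
  also have "\<dots> = (\<integral>x. g (k + x) \<partial>N)" by (rule integral_distr[OF m g])
  finally show ?thesis by simp
qed

lemma N_right:
  fixes g :: "'g \<Rightarrow> 'c::{banach,second_countable_topology}"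
  assumes k: "k \<in> K" and g: "g \<in> borel_measurable borel"
  shows "(\<integral>x. g (x + k) \<partial>N) = integral\<^sup>L N g"
proof -
  have m: "(\<lambda>x. x + k) \<in> measurable N borel" using right_meas measurable_cong_sets[OF N_sets refl] by blast
  have "integral\<^sup>L N g = integral\<^sup>L (distr N borel (\<lambda>x. x + k)) g" using N_right_distr[OF k] by simp
  also have "\<dots> = (\<integral>x. g (x + k) \<partial>N)" by (rule integral_distr[OF m g])
  finally show ?thesis by simp
qed

lemma mu_sets: "sets \<mu> = sets borel"
  and mu_left_em: "\<And>a A. A \<in> sets borel \<Longrightarrow> emeasure \<mu> ((\<lambda>x. a + x) ` A) = emeasure \<mu> A"
  and mu_right_em: "\<And>a A. A \<in> sets borel \<Longrightarrow> emeasure \<mu> ((\<lambda>x. x + a) ` A) = emeasure \<mu> A"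
  and mu_compact: "\<And>C. compact C \<Longrightarrow> emeasure \<mu> C < \<infinity>"
  using haar unfolding unimodular_haar_measure_def haar_measure_def by auto

lemma mu_space: "space \<mu> = UNIV" using mu_sets by (metis sets_eq_imp_space_eq space_borel)

lemma mu_left_distr: "distr \<mu> borel (\<lambda>x. a + x) = \<mu>"
proof (rule measure_eqI)
  show "sets (distr \<mu> borel (\<lambda>x. a + x)) = sets \<mu>" using mu_sets by simp
  fix A assume "A \<in> sets (distr \<mu> borel (\<lambda>x. a + x))"
  then have A: "A \<in> sets borel" by simp
  have m: "(\<lambda>x. a + x) \<in> measurable \<mu> borel" using left_meas measurable_cong_sets[OF mu_sets refl] by blast
  have eq: "(\<lambda>x. a + x) -` A = (\<lambda>x. - a + x) ` A"
  proof
    show "(\<lambda>x. a + x) -` A \<subseteq> (\<lambda>x. - a + x) ` A"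
    proof
      fix x assume "x \<in> (\<lambda>x. a + x) -` A"
      moreover have "x = - a + (a + x)" by (simp add: add.assoc[symmetric])
      ultimately show "x \<in> (\<lambda>x. - a + x) ` A" by blast
    qed
  qed (auto simp: add.assoc[symmetric])
  show "emeasure (distr \<mu> borel (\<lambda>x. a + x)) A = emeasure \<mu> A"
    using emeasure_distr[OF m A] mu_space eq mu_left_em[OF A] by simp
qed

lemma mu_right_distr: "distr \<mu> borel (\<lambda>x. x + a) = \<mu>"
proof (rule measure_eqI)
  show "sets (distr \<mu> borel (\<lambda>x. x + a)) = sets \<mu>" using mu_sets by simp
  fix A assume "A \<in> sets (distr \<mu> borel (\<lambda>x. x + a))"
  then have A: "A \<in> sets borel" by simp
  have m: "(\<lambda>x. x + a) \<in> measurable \<mu> borel" using right_meas measurable_cong_sets[OF mu_sets refl] by blast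
  have eq: "(\<lambda>x. x + a) -` A = (\<lambda>x. x + - a) ` A"
  proof
    show "(\<lambda>x. x + a) -` A \<subseteq> (\<lambda>x. x + - a) ` A"
    proof
      fix x assume "x \<in> (\<lambda>x. x + a) -` A"
      moreover have "x = (x + a) + - a" by (simp add: add.assoc)
      ultimately show "x \<in> (\<lambda>x. x + - a) ` A" by blast
    qed
  qed (auto simp: add.assoc)
  show "emeasure (distr \<mu> borel (\<lambda>x. x + a)) A = emeasure \<mu> A"
    using emeasure_distr[OF m A] mu_space eq mu_right_em[of A "-a", OF A] by simp
qed

lemma mu_left:
  fixes g :: "'g \<Rightarrow> 'c::{banach,second_countable_topology}"
  assumes g: "g \<in> borel_measurable borel"
  shows "(\<integral>x. g (a + x) \<partial>\<mu>) = integral\<^sup>L \<mu> g"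
proof -
  have m: "(\<lambda>x. a + x) \<in> measurable \<mu> borel" using left_meas measurable_cong_sets[OF mu_sets refl] by blast
  have "integral\<^sup>L \<mu> g = integral\<^sup>L (distr \<mu> borel (\<lambda>x. a + x)) g" using mu_left_distr by simp
  also have "\<dots> = (\<integral>x. g (a + x) \<partial>\<mu>)" by (rule integral_distr[OF m g])
  finally show ?thesis by simp
qed

lemma mu_right:
  fixes g :: "'g \<Rightarrow> 'c::{banach,second_countable_topology}"
  assumes g: "g \<in> borel_measurable borel"
  shows "(\<integral>x. g (x + a) \<partial>\<mu>) = integral\<^sup>L \<mu> g"
proof -
  have m: "(\<lambda>x. x + a) \<in> measurable \<mu> borel" using right_meas measurable_cong_sets[OF mu_sets refl] by blast
  have "integral\<^sup>L \<mu> g = integral\<^sup>L (distr \<mu> borel (\<lambda>x. x + a)) g" using mu_right_distr by simp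
  also have "\<dots> = (\<integral>x. g (x + a) \<partial>\<mu>)" by (rule integral_distr[OF m g])
  finally show ?thesis by simp
qed

definition muC where "muC C = density \<mu> (\<lambda>x. ennreal (indicator C x))"

lemma muC_conc:
  assumes C: "compact C" shows "conc (muC C) C"
  unfolding conc_def
proof (intro conjI)
  have Cb: "C \<in> sets borel" using C by (simp add: borel_closed compact_imp_closed)
  have im: "(\<lambda>x. ennreal (indicator C x)) \<in> borel_measurable \<mu>"
    using borel_measurable_indicator[of C \<mu>] by (simp add: ennreal_indicator mu_sets Cb)
  show s: "sets (muC C) = sets borel" unfolding muC_def using mu_sets by simp
  show "compact C" by (rule C)
  have em: "emeasure (muC C) A = emeasure \<mu> (C \<inter> A)" if "A \<in> sets borel" for A
  proof -
    have "emeasure (muC C) A = (\<integral>\<^sup>+ x. ennreal (indicator C x) * indicator A x \<partial>\<mu>)"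
      unfolding muC_def using that mu_sets by (intro emeasure_density[OF im]) auto
    also have "\<dots> = (\<integral>\<^sup>+ x. indicator (C \<inter> A) x \<partial>\<mu>)"
      by (intro nn_integral_cong) (auto simp: indicator_def)
    also have "\<dots> = emeasure \<mu> (C \<inter> A)" using Cb that mu_sets by (intro nn_integral_indicator) auto
    finally show ?thesis .
  qed
  have "-C \<in> sets borel" using Cb by (rule borel_comp)
  then show "emeasure (muC C) (UNIV - C) = 0" using em[of "UNIV - C"] by (simp add: Compl_eq_Diff_UNIV)
  have "space (muC C) = UNIV" using s by (metis sets_eq_imp_space_eq space_borel)
  then show "finite_measure (muC C)" using em[of UNIV] mu_compact[OF C] by (intro finite_measureI) auto
qed

lemma muC_int:
  fixes g :: "'g \<Rightarrow> 'c::{banach,second_countable_topology}"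
  assumes C: "compact C" and g: "continuous_on UNIV g" and z: "\<And>x. x \<notin> C \<Longrightarrow> g x = 0"
  shows "integrable \<mu> g" "integral\<^sup>L \<mu> g = integral\<^sup>L (muC C) g"
proof -
  have Cb: "C \<in> sets borel" using C by (simp add: borel_closed compact_imp_closed)
  have gm: "g \<in> borel_measurable \<mu>" using borel_measurable_continuous_onI[OF g] measurable_cong_sets[OF mu_sets refl] by blast
  have im: "(\<lambda>x. indicator C x :: real) \<in> borel_measurable \<mu>"
    using borel_measurable_indicator[of C \<mu>] by (simp add: mu_sets Cb)
  have eq: "(\<lambda>x. indicator C x *\<^sub>R g x) = g" using z by (auto simp: indicator_def fun_eq_iff)
  have "integrable (muC C) g" by (rule conc_integrable[OF muC_conc[OF C] g])
  then show "integrable \<mu> g" unfolding muC_def using integrable_density[OF gm im] eq by simp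
  show "integral\<^sup>L \<mu> g = integral\<^sup>L (muC C) g"
    unfolding muC_def using integral_density[OF gm im] eq by simp
qed

end

lemma conc_mono:
  fixes f g :: "'a::t2_space \<Rightarrow> real"
  assumes m: "conc m C" and f: "continuous_on UNIV f" and g: "continuous_on UNIV g"
    and le: "\<And>x. x \<in> C \<Longrightarrow> f x \<le> g x"
  shows "integral\<^sup>L m f \<le> integral\<^sup>L m g"
proof (rule integral_mono_AE)
  show "integrable m f" "integrable m g" using conc_integrable[OF m] f g by auto
  show "AE x in m. f x \<le> g x" using conc_AE[OF m] le by (simp add: eventually_mono)
qed

lemma conc_nonneg:
  fixes f :: "'a::t2_space \<Rightarrow> real"
  assumes m: "conc m C" and f: "continuous_on UNIV f" and le: "\<And>x. x \<in> C \<Longrightarrow> 0 \<le> f x"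
  shows "0 \<le> integral\<^sup>L m f"
  using conc_mono[OF m continuous_on_const f, of 0] le by simp

lemma cc: "continuous_on UNIV f \<Longrightarrow> continuous_on UNIV e \<Longrightarrow> continuous_on UNIV (\<lambda>p. f (e p))"
  using continuous_on_compose2[of UNIV f UNIV e] by auto

context gsetting begin

definition KSK :: "'g set \<Rightarrow> 'g set" where
  "KSK S = (\<lambda>p. fst p + fst (snd p) + snd (snd p)) ` (K \<times> S \<times> K)"

definition SS :: "'g set \<Rightarrow> 'g set \<Rightarrow> 'g set" where
  "SS A B = (\<lambda>p. fst p + snd p) ` (A \<times> B)"

lemma KSK_compact: "compact S \<Longrightarrow> compact (KSK S)"
proof -
  assume S: "compact S"
  have "continuous_on UNIV (\<lambda>p::'g\<times>'g\<times>'g. fst p + fst (snd p) + snd (snd p))"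
    by (intro cont_add continuous_on_fst continuous_on_snd continuous_on_id)
  then have "continuous_on (K \<times> S \<times> K) (\<lambda>p::'g\<times>'g\<times>'g. fst p + fst (snd p) + snd (snd p))"
    by (rule continuous_on_subset) simp
  moreover have "compact (K \<times> S \<times> K)" using S Kc by (intro compact_Times)
  ultimately show ?thesis unfolding KSK_def by (rule compact_continuous_image)
qed

lemma SS_compact: "compact A \<Longrightarrow> compact B \<Longrightarrow> compact (SS A B)"
proof -
  assume A: "compact A" and B: "compact B"
  have "continuous_on UNIV (\<lambda>p::'g\<times>'g. fst p + snd p)"
    by (intro cont_add continuous_on_fst continuous_on_snd continuous_on_id)
  then have "continuous_on (A \<times> B) (\<lambda>p::'g\<times>'g. fst p + snd p)"
    by (rule continuous_on_subset) simp
  moreover have "compact (A \<times> B)" using A B by (intro compact_Times)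
  ultimately show ?thesis unfolding SS_def by (rule compact_continuous_image)
qed

lemma KSK_mem: "a \<in> K \<Longrightarrow> b \<in> S \<Longrightarrow> c \<in> K \<Longrightarrow> a + b + c \<in> KSK S"
  unfolding KSK_def by (rule image_eqI[of _ _ "(a,b,c)"]) auto

lemma SS_mem: "a \<in> A \<Longrightarrow> b \<in> B \<Longrightarrow> a + b \<in> SS A B"
  unfolding SS_def by (rule image_eqI[of _ _ "(a,b)"]) auto

lemma KSK_out:
  assumes "x \<notin> KSK S" "k \<in> K" "k' \<in> K" shows "k + x + k' \<notin> S"
proof
  assume "k + x + k' \<in> S"
  then have "- k + (k + x + k') + - k' \<in> KSK S" using assms Kneg by (intro KSK_mem) auto
  moreover have "- k + (k + x + k') + - k' = x" by (simp add: add.assoc[symmetric])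
  ultimately show False using assms by simp
qed

lemma KSK_sub: "S \<subseteq> KSK S"
proof
  fix x assume "x \<in> S" then have "0 + x + 0 \<in> KSK S" using K0 by (intro KSK_mem)
  then show "x \<in> KSK S" by simp
qed

lemma N_inv:
  fixes h :: "'g \<Rightarrow> real"
  assumes h: "continuous_on UNIV h"
  shows "(\<integral>k. h (- k) \<partial>N) = integral\<^sup>L N h"
proof -
  have hm: "h \<in> borel_measurable borel" by (rule borel_measurable_continuous_onI[OF h])
  have hn: "continuous_on UNIV (\<lambda>k. h (- k))" by (intro cc[OF h] cont_minus continuous_on_id)
  have hnm: "(\<lambda>k. h (- k)) \<in> borel_measurable borel" by (rule borel_measurable_continuous_onI[OF hn])
  define \<Phi> where "\<Phi> = (\<lambda>p::'g\<times>'g. h (snd p + - fst p))"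
  have \<Phi>c: "continuous_on UNIV \<Phi>" unfolding \<Phi>_def
    by (intro cc[OF h] cont_add cont_minus continuous_intros)
  have "(\<integral>k. \<integral>l. \<Phi> (k,l) \<partial>N \<partial>N) = (\<integral>l. \<integral>k. \<Phi> (k,l) \<partial>N \<partial>N)"
    by (rule conc_fubini[OF N_conc N_conc \<Phi>c])
  moreover have "(\<integral>k. \<integral>l. \<Phi> (k,l) \<partial>N \<partial>N) = (\<integral>k. integral\<^sup>L N h \<partial>N)"
  proof (rule conc_cong[OF N_conc])
    show "(\<lambda>k. \<integral>l. \<Phi> (k,l) \<partial>N) \<in> borel_measurable borel"
      by (intro borel_measurable_continuous_onI conc_cont_param[OF N_conc \<Phi>c])
    fix k assume k: "k \<in> K"
    show "(\<integral>l. \<Phi> (k,l) \<partial>N) = integral\<^sup>L N h" unfolding \<Phi>_def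
      using N_right[OF Kneg[OF k] hm] by simp
  qed simp
  moreover have "(\<integral>l. \<integral>k. \<Phi> (k,l) \<partial>N \<partial>N) = (\<integral>l. (\<integral>k. h (- k) \<partial>N) \<partial>N)"
  proof (rule conc_cong[OF N_conc])
    have "continuous_on UNIV (\<lambda>q::'g\<times>'g. \<Phi> (snd q, fst q))" by (intro cc[OF \<Phi>c] continuous_intros)
    then show "(\<lambda>l. \<integral>k. \<Phi> (k,l) \<partial>N) \<in> borel_measurable borel"
      using conc_cont_param[OF N_conc, of "\<lambda>q. \<Phi> (snd q, fst q)"]
      by (intro borel_measurable_continuous_onI) simp
    fix l assume l: "l \<in> K"
    have "(\<integral>k. h (- (k + - l)) \<partial>N) = (\<integral>k. h (- k) \<partial>N)"
      using N_right[OF Kneg[OF l] hnm] by simp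
    moreover have "- (k + - l) = l + - k" for k by (simp add: minus_add)
    ultimately show "(\<integral>k. \<Phi> (k,l) \<partial>N) = (\<integral>k. h (- k) \<partial>N)" unfolding \<Phi>_def by simp
  qed simp
  ultimately have "(\<integral>k. integral\<^sup>L N h \<partial>N) = (\<integral>l. (\<integral>k. h (- k) \<partial>N) \<partial>N)" by metis
  then show ?thesis unfolding N_const by simp
qed

lemma Aop_N:
  assumes v: "continuous_on UNIV v"
  shows "Aop \<nu> v x = sqrt (\<integral>k. \<integral>k'. (cmod (v (k + x + k')))\<^sup>2 \<partial>N \<partial>N)"
proof -
  define G where "G = (\<lambda>p::'g\<times>'g. (cmod (v (fst p + x + snd p)))\<^sup>2)"
  have Gc: "continuous_on UNIV G" unfolding G_def
    by (intro continuous_intros cc[OF v] cont_add)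
  have "(\<integral>k'. (cmod (v (k + x + k')))\<^sup>2 \<partial>\<nu>) = (\<integral>k'. (cmod (v (k + x + k')))\<^sup>2 \<partial>N)" for k
    using N_int[OF borel_measurable_continuous_onI[OF cont_Pair_left[OF Gc, of k]]] unfolding G_def by simp
  then have "(\<integral>k. \<integral>k'. (cmod (v (k + x + k')))\<^sup>2 \<partial>\<nu> \<partial>\<nu>) = (\<integral>k. \<integral>k'. (cmod (v (k + x + k')))\<^sup>2 \<partial>N \<partial>\<nu>)"
    by simp
  also have "\<dots> = (\<integral>k. \<integral>k'. (cmod (v (k + x + k')))\<^sup>2 \<partial>N \<partial>N)"
    using N_int[OF borel_measurable_continuous_onI[OF conc_cont_param[OF N_conc Gc]]] unfolding G_def by simp
  finally show ?thesis unfolding Aop_def by simp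
qed

lemma Aop_cont:
  assumes v: "continuous_on UNIV v"
  shows "continuous_on UNIV (Aop \<nu> v)"
proof -
  define G where "G = (\<lambda>p::('g\<times>'g)\<times>'g. (cmod (v (snd (fst p) + fst (fst p) + snd p)))\<^sup>2)"
  have Gc: "continuous_on UNIV G" unfolding G_def
    by (intro continuous_intros cc[OF v] cont_add)
  have c1: "continuous_on UNIV (\<lambda>q. \<integral>k'. G (q, k') \<partial>N)" by (rule conc_cont_param[OF N_conc Gc])
  have c2: "continuous_on UNIV (\<lambda>x. \<integral>k. (\<integral>k'. G ((x,k), k') \<partial>N) \<partial>N)"
    using conc_cont_param[OF N_conc c1] by simp
  show ?thesis
    unfolding Aop_N[OF v, abs_def] using c2 unfolding G_def
    by (intro continuous_on_real_sqrt) simp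
qed

lemma Aop_nonneg: "Aop \<nu> v x \<ge> 0" unfolding Aop_def by simp

lemma Aop_supp:
  assumes v: "continuous_on UNIV v" and vz: "\<And>y. y \<notin> S \<Longrightarrow> v y = 0" and x: "x \<notin> KSK S"
  shows "Aop \<nu> v x = 0"
proof -
  have "(\<integral>k'. (cmod (v (k + x + k')))\<^sup>2 \<partial>N) = (\<integral>k'. 0 \<partial>N)" if k: "k \<in> K" for k
  proof (rule conc_cong[OF N_conc])
    show "(\<lambda>k'. (cmod (v (k + x + k')))\<^sup>2) \<in> borel_measurable borel"
      by (intro borel_measurable_continuous_onI continuous_intros cc[OF v] cont_add)
    show "(cmod (v (k + x + k')))\<^sup>2 = 0" if "k' \<in> K" for k'
      using vz KSK_out[OF x k that] by simp
  qed simp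
  then have "(\<integral>k. \<integral>k'. (cmod (v (k + x + k')))\<^sup>2 \<partial>N \<partial>N) = (\<integral>k. 0 \<partial>N)"
  proof (intro conc_cong[OF N_conc])
    define G where "G = (\<lambda>p::'g\<times>'g. (cmod (v (fst p + x + snd p)))\<^sup>2)"
    have Gc: "continuous_on UNIV G" unfolding G_def
      by (intro continuous_intros cc[OF v] cont_add)
    show "(\<lambda>k. \<integral>k'. (cmod (v (k + x + k')))\<^sup>2 \<partial>N) \<in> borel_measurable borel"
      using borel_measurable_continuous_onI[OF conc_cont_param[OF N_conc Gc]] unfolding G_def by simp
  qed auto
  then show ?thesis unfolding Aop_N[OF v] by simp
qed

lemma Aop_left:
  assumes v: "continuous_on UNIV v" and k0: "k0 \<in> K"
  shows "Aop \<nu> v (k0 + w) = Aop \<nu> v w"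
proof -
  define G where "G = (\<lambda>p::'g\<times>'g. (cmod (v (fst p + w + snd p)))\<^sup>2)"
  have Gc: "continuous_on UNIV G" unfolding G_def
    by (intro continuous_intros cc[OF v] cont_add)
  have gm: "(\<lambda>k. \<integral>k'. G (k,k') \<partial>N) \<in> borel_measurable borel"
    by (rule borel_measurable_continuous_onI[OF conc_cont_param[OF N_conc Gc]])
  have "(\<integral>k. (\<integral>k'. G (k + k0, k') \<partial>N) \<partial>N) = (\<integral>k. (\<integral>k'. G (k,k') \<partial>N) \<partial>N)"
    using N_right[OF k0 gm] by simp
  moreover have "G (k + k0, k') = (cmod (v (k + (k0 + w) + k')))\<^sup>2" for k k'
    unfolding G_def by (simp add: add.assoc)
  ultimately show ?thesis unfolding Aop_N[OF v] G_def by simp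
qed

end

context gsetting begin

lemma conv_eq:
  fixes f f' :: "'g \<Rightarrow> 'b::{real_normed_field,second_countable_topology,banach}"
  assumes f: "continuous_on UNIV f" and f': "continuous_on UNIV f'" and Sf: "compact Sf"
    and fz: "\<And>y. y \<notin> Sf \<Longrightarrow> f y = 0"
  shows "conv \<mu> f f' x = (\<integral>y. f y * f' (- y + x) \<partial>muC Sf)"
proof -
  have "continuous_on UNIV (\<lambda>y. f y * f' (- y + x))"
    by (intro continuous_intros f cc[OF f'] cont_add cont_minus)
  then show ?thesis unfolding conv_def by (rule muC_int(2)[OF Sf]) (simp add: fz)
qed

lemma conv_cont:
  fixes f f' :: "'g \<Rightarrow> 'b::{real_normed_field,second_countable_topology,banach}"
  assumes f: "continuous_on UNIV f" and f': "continuous_on UNIV f'" and Sf: "compact Sf"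
    and fz: "\<And>y. y \<notin> Sf \<Longrightarrow> f y = 0"
  shows "continuous_on UNIV (conv \<mu> f f')"
proof -
  have G: "continuous_on UNIV (\<lambda>p::'g\<times>'g. f (snd p) * f' (- snd p + fst p))"
    by (intro continuous_intros cc[OF f] cc[OF f'] cont_add cont_minus)
  have "continuous_on UNIV (\<lambda>x. \<integral>y. f y * f' (- y + x) \<partial>muC Sf)"
    using conc_cont_param[OF muC_conc[OF Sf] G] by simp
  then show ?thesis using conv_eq[OF f f' Sf fz] by simp
qed

lemma conv_supp:
  fixes f f' :: "'g \<Rightarrow> 'b::{real_normed_field,second_countable_topology,banach}"
  assumes fz: "\<And>y. y \<notin> Sf \<Longrightarrow> f y = 0" and fz': "\<And>y. y \<notin> Sf' \<Longrightarrow> f' y = 0"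
    and x: "x \<notin> SS Sf Sf'"
  shows "conv \<mu> f f' x = 0"
proof -
  have "f y * f' (- y + x) = 0" for y
  proof (rule ccontr)
    assume "f y * f' (- y + x) \<noteq> 0"
    then have "y \<in> Sf" "- y + x \<in> Sf'" using fz fz' by auto
    then have "y + (- y + x) \<in> SS Sf Sf'" by (rule SS_mem)
    then show False using x by (simp add: add.assoc[symmetric])
  qed
  then have "(\<lambda>y. f y * f' (- y + x)) = (\<lambda>y. 0)" by (rule ext)
  then show ?thesis unfolding conv_def by simp
qed

end

context gsetting begin

lemma part1:
  fixes f f' :: "'g \<Rightarrow> complex"
  assumes f: "continuous_on UNIV f" and f': "continuous_on UNIV f'"
    and Sf: "compact Sf" and fz: "\<And>y. y \<notin> Sf \<Longrightarrow> f y = 0"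
    and Sf': "compact Sf'" and fz': "\<And>y. y \<notin> Sf' \<Longrightarrow> f' y = 0"
  shows "Aop \<nu> (conv \<mu> f f') x \<le> conv \<mu> (Aop \<nu> f) (Aop \<nu> f') x"
proof -
  define u where "u = conv \<mu> f f'"
  have uc: "continuous_on UNIV u" unfolding u_def by (rule conv_cont[OF f f' Sf fz])
  define C0 where "C0 = KSK Sf"
  have C0c: "compact C0" unfolding C0_def by (rule KSK_compact[OF Sf])
  define M0 where "M0 = muC C0"
  have M0: "conc M0 C0" unfolding M0_def by (rule muC_conc[OF C0c])
  note NC = N_conc
  define a where "a = (\<lambda>k z. sqrt (\<integral>k''. (cmod (f (k + z + k'')))\<^sup>2 \<partial>N))"
  define b where "b = (\<lambda>k' z. sqrt (\<integral>k''. (cmod (f' (- k'' + - z + x + k')))\<^sup>2 \<partial>N))"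
  define P where "P = (\<lambda>k k'. \<integral>z. a k z * b k' z \<partial>M0)"
  have ca: "continuous_on UNIV (\<lambda>p. a (fst p) (snd p))"
  proof -
    have G: "continuous_on UNIV (\<lambda>q::('g\<times>'g)\<times>'g. (cmod (f (fst (fst q) + snd (fst q) + snd q)))\<^sup>2)"
      by (intro continuous_intros cc[OF f] cont_add)
    show ?thesis unfolding a_def using conc_cont_param[OF NC G]
      by (intro continuous_on_real_sqrt) simp
  qed
  have cb: "continuous_on UNIV (\<lambda>p. b (fst p) (snd p))"
  proof -
    have G: "continuous_on UNIV (\<lambda>q::('g\<times>'g)\<times>'g. (cmod (f' (- snd q + - snd (fst q) + x + fst (fst q))))\<^sup>2)"
      by (intro continuous_intros cc[OF f'] cont_add cont_minus)
    show ?thesis unfolding b_def using conc_cont_param[OF NC G]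
      by (intro continuous_on_real_sqrt) simp
  qed
  have ca': "continuous_on UNIV (\<lambda>q. a (e1 q) (e2 q))" if "continuous_on UNIV e1" "continuous_on UNIV e2" for e1 e2 :: "'x::topological_space \<Rightarrow> 'g"
    using cc[OF ca, of "\<lambda>q. (e1 q, e2 q)"] that by (simp add: continuous_on_Pair)
  have cb': "continuous_on UNIV (\<lambda>q. b (e1 q) (e2 q))" if "continuous_on UNIV e1" "continuous_on UNIV e2" for e1 e2 :: "'x::topological_space \<Rightarrow> 'g"
    using cc[OF cb, of "\<lambda>q. (e1 q, e2 q)"] that by (simp add: continuous_on_Pair)
  have cP: "continuous_on UNIV (\<lambda>p. P (fst p) (snd p))"
  proof -
    have G: "continuous_on UNIV (\<lambda>q::('g\<times>'g)\<times>'g. a (fst (fst q)) (snd q) * b (snd (fst q)) (snd q))"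
      by (intro continuous_intros ca' cb')
    show ?thesis unfolding P_def using conc_cont_param[OF M0 G] by simp
  qed
  have cP': "continuous_on UNIV (\<lambda>q. P (e1 q) (e2 q))" if "continuous_on UNIV e1" "continuous_on UNIV e2" for e1 e2 :: "'x::topological_space \<Rightarrow> 'g"
    using cc[OF cP, of "\<lambda>q. (e1 q, e2 q)"] that by (simp add: continuous_on_Pair)
  have a_nn: "a k z \<ge> 0" for k z unfolding a_def by simp
  have b_nn: "b k z \<ge> 0" for k z unfolding b_def by simp

  have claim1: "cmod (u (k + x + k')) \<le> P k k'" if k: "k \<in> K" and k': "k' \<in> K" for k k'
  proof -
    define H where "H = (\<lambda>k'' z. f (k + z + k'') * f' (- k'' + - z + x + k'))"
    have cH: "continuous_on UNIV (\<lambda>p. H (fst p) (snd p))" unfolding H_def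
      by (intro continuous_intros cc[OF f] cc[OF f'] cont_add cont_minus)
    have cH1: "continuous_on UNIV (H k'')" for k''
      using cc[OF cH, of "\<lambda>z. (k'', z)"] by (simp add: continuous_on_Pair)
    have s1: "u (k + x + k') = (\<integral>z. f (k + z) * f' (- z + x + k') \<partial>\<mu>)"
    proof -
      have gm: "(\<lambda>y. f y * f' (- y + (k + x + k'))) \<in> borel_measurable borel"
        by (intro borel_measurable_continuous_onI continuous_intros f cc[OF f'] cont_add cont_minus)
      have "u (k + x + k') = (\<integral>z. f (k + z) * f' (- (k + z) + (k + x + k')) \<partial>\<mu>)"
        unfolding u_def conv_def using mu_left[OF gm, of k] by simp
      also have "\<dots> = (\<integral>z. f (k + z) * f' (- z + x + k') \<partial>\<mu>)"
      proof -
        have eq: "- (k + z) + (k + x + k') = - z + x + k'" for z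
          by (simp add: minus_add add.assoc[symmetric])
        show ?thesis by (simp only: eq)
      qed
      finally show ?thesis .
    qed
    have s2: "u (k + x + k') = (\<integral>z. H k'' z \<partial>\<mu>)" for k''
    proof -
      have gm: "(\<lambda>z. f (k + z) * f' (- z + x + k')) \<in> borel_measurable borel"
        by (intro borel_measurable_continuous_onI continuous_intros cc[OF f] cc[OF f'] cont_add cont_minus)
      have "(\<integral>z. f (k + z) * f' (- z + x + k') \<partial>\<mu>) = (\<integral>z. f (k + (z + k'')) * f' (- (z + k'') + x + k') \<partial>\<mu>)"
        using mu_right[OF gm, of k''] by simp
      also have "\<dots> = (\<integral>z. H k'' z \<partial>\<mu>)"
      proof -
        have eq: "- (z + k'') + x + k' = - k'' + - z + x + k'" "k + (z + k'') = k + z + k''" for z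
          by (simp_all add: minus_add add.assoc)
        show ?thesis unfolding H_def by (simp only: eq)
      qed
      finally show ?thesis using s1 by simp
    qed
    have s3: "u (k + x + k') = (\<integral>z. H k'' z \<partial>M0)" if k'': "k'' \<in> K" for k''
    proof -
      have "H k'' z = 0" if "z \<notin> C0" for z
        using KSK_out[OF that[unfolded C0_def] k k''] fz unfolding H_def by simp
      then show ?thesis using s2 muC_int(2)[OF C0c cH1] unfolding M0_def by simp
    qed
    have cHi: "continuous_on UNIV (\<lambda>k''. \<integral>z. H k'' z \<partial>M0)"
      using conc_cont_param[OF M0 cH] by simp
    have s4: "u (k + x + k') = (\<integral>k''. (\<integral>z. H k'' z \<partial>M0) \<partial>N)"
    proof -
      have "(\<integral>k''. u (k + x + k') \<partial>N) = (\<integral>k''. (\<integral>z. H k'' z \<partial>M0) \<partial>N)"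
        by (rule conc_cong[OF NC]) (auto intro: borel_measurable_continuous_onI cHi s3)
      then show ?thesis by simp
    qed
    have cnH: "continuous_on UNIV (\<lambda>p. cmod (H (fst p) (snd p)))" by (intro continuous_intros cH)
    have cnHi: "continuous_on UNIV (\<lambda>k''. \<integral>z. cmod (H k'' z) \<partial>M0)"
      using conc_cont_param[OF M0 cnH] by simp
    have "cmod (u (k + x + k')) \<le> (\<integral>k''. cmod (\<integral>z. H k'' z \<partial>M0) \<partial>N)"
      unfolding s4 by (rule integral_norm_bound)
    also have "\<dots> \<le> (\<integral>k''. (\<integral>z. cmod (H k'' z) \<partial>M0) \<partial>N)"
      by (rule conc_mono[OF NC]) (auto intro: continuous_intros cHi cnHi integral_norm_bound)
    also have "\<dots> = (\<integral>z. (\<integral>k''. cmod (H k'' z) \<partial>N) \<partial>M0)"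
      using conc_fubini[OF NC M0 cnH] by simp
    also have "\<dots> \<le> (\<integral>z. a k z * b k' z \<partial>M0)"
    proof (rule conc_mono[OF M0])
      have cnH2: "continuous_on UNIV (\<lambda>q::'g\<times>'g. cmod (H (snd q) (fst q)))"
        using cc[OF cnH, of "\<lambda>q. (snd q, fst q)"] by (simp add: continuous_intros)
      show "continuous_on UNIV (\<lambda>z. \<integral>k''. cmod (H k'' z) \<partial>N)"
        using conc_cont_param[OF NC cnH2] by simp
      show "continuous_on UNIV (\<lambda>z. a k z * b k' z)" by (intro continuous_intros ca' cb')
      fix z
      define p where "p = (\<lambda>k''. cmod (f (k + z + k'')))"
      define q where "q = (\<lambda>k''. cmod (f' (- k'' + - z + x + k')))"
      have cp: "continuous_on UNIV p" unfolding p_def by (intro continuous_intros cc[OF f] cont_add)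
      have cq: "continuous_on UNIV q" unfolding q_def by (intro continuous_intros cc[OF f'] cont_add cont_minus)
      have "(\<integral>k''. p k'' * q k'' \<partial>N) \<le> sqrt (\<integral>k''. (p k'')\<^sup>2 \<partial>N) * sqrt (\<integral>k''. (q k'')\<^sup>2 \<partial>N)"
        by (intro integral_CS conc_integrable[OF NC] continuous_intros cp cq)
      moreover have "(\<lambda>k''. cmod (H k'' z)) = (\<lambda>k''. p k'' * q k'')"
        unfolding H_def p_def q_def by (simp add: norm_mult)
      ultimately show "(\<integral>k''. cmod (H k'' z) \<partial>N) \<le> a k z * b k' z"
        unfolding a_def b_def p_def q_def by simp
    qed
    finally show ?thesis unfolding P_def .
  qed
  define N2 where "N2 = (\<integral>k. \<integral>k'. (P k k')\<^sup>2 \<partial>N \<partial>N)"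
  have cP2i: "continuous_on UNIV (\<lambda>k. \<integral>k'. (P k k')\<^sup>2 \<partial>N)"
  proof -
    have c: "continuous_on UNIV (\<lambda>p. (P (fst p) (snd p))\<^sup>2)" by (intro continuous_intros cP)
    show ?thesis using conc_cont_param[OF NC c] by simp
  qed
  have cP2i': "continuous_on UNIV (\<lambda>k'. (P k k')\<^sup>2)" for k
    by (intro continuous_intros cP' continuous_on_const continuous_on_id)
  have claim3: "(\<integral>k. \<integral>k'. (cmod (u (k + x + k')))\<^sup>2 \<partial>N \<partial>N) \<le> N2"
    unfolding N2_def
  proof (rule conc_mono[OF NC])
    have c: "continuous_on UNIV (\<lambda>p::'g\<times>'g. (cmod (u (fst p + x + snd p)))\<^sup>2)"
      by (intro continuous_intros cc[OF uc] cont_add)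
    show "continuous_on UNIV (\<lambda>k. \<integral>k'. (cmod (u (k + x + k')))\<^sup>2 \<partial>N)"
      using conc_cont_param[OF NC c] by simp
    show "continuous_on UNIV (\<lambda>k. \<integral>k'. (P k k')\<^sup>2 \<partial>N)" by (rule cP2i)
    fix k assume k: "k \<in> K"
    show "(\<integral>k'. (cmod (u (k + x + k')))\<^sup>2 \<partial>N) \<le> (\<integral>k'. (P k k')\<^sup>2 \<partial>N)"
    proof (rule conc_mono[OF NC])
      show "continuous_on UNIV (\<lambda>k'. (cmod (u (k + x + k')))\<^sup>2)"
        by (intro continuous_intros cc[OF uc] cont_add)
      show "continuous_on UNIV (\<lambda>k'. (P k k')\<^sup>2)" by (rule cP2i')
      fix k' assume k': "k' \<in> K"
      show "(cmod (u (k + x + k')))\<^sup>2 \<le> (P k k')\<^sup>2"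
        using claim1[OF k k'] by (intro power_mono) auto
    qed
  qed
  define aT where "aT = (\<lambda>z. sqrt (\<integral>k. (a k z)\<^sup>2 \<partial>N))"
  define bt where "bt = (\<lambda>z. sqrt (\<integral>k'. (b k' z)\<^sup>2 \<partial>N))"
  define R where "R = (\<lambda>k. sqrt (\<integral>k'. (P k k')\<^sup>2 \<partial>N))"
  have cat: "continuous_on UNIV aT"
  proof -
    have c: "continuous_on UNIV (\<lambda>p::'g\<times>'g. (a (snd p) (fst p))\<^sup>2)"
      by (intro continuous_intros ca')
    show ?thesis unfolding aT_def using conc_cont_param[OF NC c] by (intro continuous_on_real_sqrt) simp
  qed
  have cbt: "continuous_on UNIV bt"
  proof -
    have c: "continuous_on UNIV (\<lambda>p::'g\<times>'g. (b (snd p) (fst p))\<^sup>2)"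
      by (intro continuous_intros cb')
    show ?thesis unfolding bt_def using conc_cont_param[OF NC c] by (intro continuous_on_real_sqrt) simp
  qed
  have cR: "continuous_on UNIV R" unfolding R_def by (intro continuous_on_real_sqrt cP2i)
  have bt_nn: "bt z \<ge> 0" for z unfolding bt_def by simp
  have N2_nn: "N2 \<ge> 0" unfolding N2_def
    by (intro integral_nonneg_AE AE_I2) simp
  define c where "c = (\<integral>z. aT z * bt z \<partial>M0)"
  have c_nn: "c \<ge> 0" unfolding c_def aT_def bt_def
    by (intro integral_nonneg_AE AE_I2) simp
  have cG1: "continuous_on UNIV (\<lambda>p. P k (fst p) * (a k (snd p) * b (fst p) (snd p)))" for k
    by (intro continuous_intros cP' ca' cb')
  have cG3: "continuous_on UNIV (\<lambda>q::('g\<times>'g)\<times>'g. P (fst (fst q)) (snd q) * (a (fst (fst q)) (snd (fst q)) * b (snd q) (snd (fst q))))"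
    by (intro continuous_intros cP' ca' cb')
  have cG2: "continuous_on UNIV (\<lambda>p. \<integral>k'. P (fst p) k' * (a (fst p) (snd p) * b k' (snd p)) \<partial>N)"
    using conc_cont_param[OF NC cG3] by simp
  have cG2': "continuous_on UNIV (\<lambda>z. \<integral>k. \<integral>k'. P k k' * (a k z * b k' z) \<partial>N \<partial>N)"
  proof -
    have c: "continuous_on UNIV (\<lambda>q::'g\<times>'g. \<integral>k'. P (snd q) k' * (a (snd q) (fst q) * b k' (fst q)) \<partial>N)"
      using cc[OF cG2, of "\<lambda>q. (snd q, fst q)"] by (simp add: continuous_intros)
    show ?thesis using conc_cont_param[OF NC c] by simp
  qed
  have t1: "N2 = (\<integral>k. \<integral>k'. \<integral>z. P k k' * (a k z * b k' z) \<partial>M0 \<partial>N \<partial>N)"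
    unfolding N2_def by (simp add: power2_eq_square P_def)
  also have "\<dots> = (\<integral>k. \<integral>z. \<integral>k'. P k k' * (a k z * b k' z) \<partial>N \<partial>M0 \<partial>N)"
    using conc_fubini[OF NC M0 cG1] by simp
  also have "\<dots> = (\<integral>z. \<integral>k. \<integral>k'. P k k' * (a k z * b k' z) \<partial>N \<partial>N \<partial>M0)"
    using conc_fubini[OF NC M0 cG2] by simp
  also have "\<dots> \<le> (\<integral>z. aT z * bt z * sqrt N2 \<partial>M0)"
  proof (rule conc_mono[OF M0 cG2'])
    show "continuous_on UNIV (\<lambda>z. aT z * bt z * sqrt N2)" by (intro continuous_intros cat cbt)
    fix z
    have cPb: "continuous_on UNIV (\<lambda>k. \<integral>k'. P k k' * b k' z \<partial>N)"
    proof -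
      have c: "continuous_on UNIV (\<lambda>p::'g\<times>'g. P (fst p) (snd p) * b (snd p) z)"
        by (intro continuous_intros cP' cb')
      show ?thesis using conc_cont_param[OF NC c] by simp
    qed
    have "P k k' * (a k z * b k' z) = a k z * (P k k' * b k' z)" for k k' by (simp add: mult_ac)
    then have e1: "(\<integral>k. \<integral>k'. P k k' * (a k z * b k' z) \<partial>N \<partial>N) = (\<integral>k. a k z * (\<integral>k'. P k k' * b k' z \<partial>N) \<partial>N)"
      by (simp only: integral_mult_right_zero)
    have e2: "(\<integral>k'. P k k' * b k' z \<partial>N) \<le> R k * bt z" for k
      unfolding R_def bt_def
      by (intro integral_CS conc_integrable[OF NC] continuous_intros cP' cb')
    have e3: "(\<integral>k. a k z * (\<integral>k'. P k k' * b k' z \<partial>N) \<partial>N) \<le> (\<integral>k. a k z * (R k * bt z) \<partial>N)"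
    proof (rule conc_mono[OF NC])
      show "continuous_on UNIV (\<lambda>k. a k z * (\<integral>k'. P k k' * b k' z \<partial>N))"
        by (intro continuous_intros ca' cPb)
      show "continuous_on UNIV (\<lambda>k. a k z * (R k * bt z))"
        by (intro continuous_intros ca' cR)
      fix k show "a k z * (\<integral>k'. P k k' * b k' z \<partial>N) \<le> a k z * (R k * bt z)"
        by (rule mult_left_mono[OF e2 a_nn])
    qed
    have "a k z * (R k * bt z) = bt z * (a k z * R k)" for k by (simp add: mult_ac)
    then have e4: "(\<integral>k. a k z * (R k * bt z) \<partial>N) = bt z * (\<integral>k. a k z * R k \<partial>N)" by (simp only: integral_mult_right_zero)
    have e5: "(\<integral>k. a k z * R k \<partial>N) \<le> aT z * sqrt (\<integral>k. (R k)\<^sup>2 \<partial>N)"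
      unfolding aT_def
      by (intro integral_CS conc_integrable[OF NC] continuous_intros ca' cR)
    have "(R k)\<^sup>2 = (\<integral>k'. (P k k')\<^sup>2 \<partial>N)" for k
    proof -
      have "(\<integral>k'. (P k k')\<^sup>2 \<partial>N) \<ge> 0" by (intro integral_nonneg_AE AE_I2) simp
      then show ?thesis unfolding R_def by simp
    qed
    then have e6: "(\<integral>k. (R k)\<^sup>2 \<partial>N) = N2" unfolding N2_def by simp
    have "(\<integral>k. \<integral>k'. P k k' * (a k z * b k' z) \<partial>N \<partial>N) \<le> bt z * (aT z * sqrt N2)"
    proof -
      have e7: "bt z * (\<integral>k. a k z * R k \<partial>N) \<le> bt z * (aT z * sqrt N2)"
        using mult_left_mono[OF e5 bt_nn[of z]] e6 by simp
      show ?thesis using e1 e3 e4 e7 by linarith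
    qed
    then show "(\<integral>k. \<integral>k'. P k k' * (a k z * b k' z) \<partial>N \<partial>N) \<le> aT z * bt z * sqrt N2"
      by (simp add: mult_ac)
  qed
  also have "\<dots> = c * sqrt N2" unfolding c_def by simp
  finally have N2le: "N2 \<le> c * sqrt N2" .
  have claim4: "sqrt N2 \<le> c"
  proof (cases "N2 = 0")
    case True then show ?thesis using c_nn by simp
  next
    case False
    then have pos: "sqrt N2 > 0" using N2_nn by simp
    have "sqrt N2 * sqrt N2 = N2" using N2_nn by (simp add: real_sqrt_mult[symmetric])
    then have "sqrt N2 * sqrt N2 \<le> c * sqrt N2" using N2le by simp
    then show ?thesis using pos by (meson mult_le_cancel_right_pos)
  qed
  have aT_eq: "aT z = Aop \<nu> f z" for z
  proof -
    have "(a k z)\<^sup>2 = (\<integral>k''. (cmod (f (k + z + k'')))\<^sup>2 \<partial>N)" for k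
    proof -
      have "(\<integral>k''. (cmod (f (k + z + k'')))\<^sup>2 \<partial>N) \<ge> 0" by (intro integral_nonneg_AE AE_I2) simp
      then show ?thesis unfolding a_def by simp
    qed
    then show ?thesis unfolding aT_def Aop_N[OF f] by simp
  qed
  have bt_eq: "bt z = Aop \<nu> f' (- z + x)" for z
  proof -
    define w where "w = - z + x"
    define \<Psi> where "\<Psi> = (\<lambda>p::'g\<times>'g. (cmod (f' (- fst p + w + snd p)))\<^sup>2)"
    have c\<Psi>: "continuous_on UNIV \<Psi>" unfolding \<Psi>_def by (intro continuous_intros cc[OF f'] cont_add cont_minus)
    have "(b k' z)\<^sup>2 = (\<integral>k''. \<Psi> (k'', k') \<partial>N)" for k'
    proof -
      have "(\<integral>k''. (cmod (f' (- k'' + - z + x + k')))\<^sup>2 \<partial>N) \<ge> 0" by (intro integral_nonneg_AE AE_I2) simp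
      moreover have "- k'' + - z + x + k' = - k'' + w + k'" for k'' unfolding w_def by (simp only: add.assoc)
      ultimately show ?thesis unfolding b_def \<Psi>_def by simp
    qed
    then have "(\<integral>k'. (b k' z)\<^sup>2 \<partial>N) = (\<integral>k'. \<integral>k''. \<Psi> (k'', k') \<partial>N \<partial>N)" by simp
    also have "\<dots> = (\<integral>k''. \<integral>k'. \<Psi> (k'', k') \<partial>N \<partial>N)" using conc_fubini[OF NC NC c\<Psi>] by simp
    also have "\<dots> = (\<integral>k. \<integral>k'. (cmod (f' (k + w + k')))\<^sup>2 \<partial>N \<partial>N)"
    proof -
      define h where "h = (\<lambda>v. \<integral>k'. (cmod (f' (v + w + k')))\<^sup>2 \<partial>N)"
      have ch0: "continuous_on UNIV (\<lambda>p::'g\<times>'g. (cmod (f' (fst p + w + snd p)))\<^sup>2)"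
        by (intro continuous_intros cc[OF f'] cont_add)
      have ch: "continuous_on UNIV h" unfolding h_def using conc_cont_param[OF NC ch0] by simp
      have "(\<integral>k''. \<integral>k'. \<Psi> (k'', k') \<partial>N \<partial>N) = (\<integral>k''. h (- k'') \<partial>N)" unfolding h_def \<Psi>_def by simp
      also have "\<dots> = integral\<^sup>L N h" by (rule N_inv[OF ch])
      finally show ?thesis unfolding h_def .
    qed
    finally show ?thesis unfolding bt_def Aop_N[OF f'] w_def by simp
  qed
  have claim6: "conv \<mu> (Aop \<nu> f) (Aop \<nu> f') x = c"
  proof -
    have cA: "continuous_on UNIV (Aop \<nu> f)" by (rule Aop_cont[OF f])
    have cA': "continuous_on UNIV (Aop \<nu> f')" by (rule Aop_cont[OF f'])
    have cI: "continuous_on UNIV (\<lambda>z. Aop \<nu> f z * Aop \<nu> f' (- z + x))"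
      by (intro continuous_intros cA cc[OF cA'] cont_add cont_minus)
    have "conv \<mu> (Aop \<nu> f) (Aop \<nu> f') x = (\<integral>z. Aop \<nu> f z * Aop \<nu> f' (- z + x) \<partial>M0)"
      unfolding conv_def M0_def
      by (rule muC_int(2)[OF C0c cI]) (simp add: Aop_supp[OF f fz] C0_def)
    also have "\<dots> = c" unfolding c_def by (simp add: aT_eq bt_eq)
    finally show ?thesis .
  qed
  have "Aop \<nu> u x \<le> sqrt N2" unfolding Aop_N[OF uc] using claim3 by (rule real_sqrt_le_mono)
  then show ?thesis using claim4 claim6 unfolding u_def by simp
qed
end

context gsetting begin

lemma part2:
  fixes f f' :: "'g \<Rightarrow> complex" and \<phi> :: "'g \<Rightarrow> real"
  assumes f: "continuous_on UNIV f" and f': "continuous_on UNIV f'"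
    and Sf: "compact Sf" and fz: "\<And>y. y \<notin> Sf \<Longrightarrow> f y = 0"
    and Sf': "compact Sf'" and fz': "\<And>y. y \<notin> Sf' \<Longrightarrow> f' y = 0"
    and sph: "spherical_function K \<nu> \<phi>" and pos: "\<And>x. \<phi> x > 0"
  shows "(\<integral>x. Aop \<nu> (conv \<mu> f f') x * \<phi> x \<partial>\<mu>)
              \<le> (\<integral>y. Aop \<nu> f y * \<phi> y \<partial>\<mu>) * (\<integral>x. Aop \<nu> f' x * \<phi> x \<partial>\<mu>)"
proof -
  have \<phi>c: "continuous_on UNIV \<phi>" and \<phi>sph: "\<And>x y. (\<integral>k. \<phi> (x + k + y) \<partial>\<nu>) = \<phi> x * \<phi> y"
    using sph unfolding spherical_function_def by auto
  define u where "u = conv \<mu> f f'"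
  have uc: "continuous_on UNIV u" unfolding u_def by (rule conv_cont[OF f f' Sf fz])
  define C0 where "C0 = KSK Sf"
  define C0' where "C0' = KSK Sf'"
  define E where "E = SS C0 C0'"
  have C0c: "compact C0" unfolding C0_def by (rule KSK_compact[OF Sf])
  have C0c': "compact C0'" unfolding C0'_def by (rule KSK_compact[OF Sf'])
  have Ec: "compact E" unfolding E_def by (rule SS_compact[OF C0c C0c'])
  define M0 where "M0 = muC C0"
  define M0' where "M0' = muC C0'"
  define ME where "ME = muC E"
  have M0: "conc M0 C0" unfolding M0_def by (rule muC_conc[OF C0c])
  have M0': "conc M0' C0'" unfolding M0'_def by (rule muC_conc[OF C0c'])
  have ME: "conc ME E" unfolding ME_def by (rule muC_conc[OF Ec])
  note NC = N_conc
  define Af where "Af = Aop \<nu> f"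
  define Af' where "Af' = Aop \<nu> f'"
  define Au where "Au = Aop \<nu> u"
  have cAf: "continuous_on UNIV Af" unfolding Af_def by (rule Aop_cont[OF f])
  have cAf': "continuous_on UNIV Af'" unfolding Af'_def by (rule Aop_cont[OF f'])
  have cAu: "continuous_on UNIV Au" unfolding Au_def by (rule Aop_cont[OF uc])
  have Afz: "Af z = 0" if "z \<notin> C0" for z unfolding Af_def using Aop_supp[OF f fz] that C0_def by simp
  have Afz': "Af' z = 0" if "z \<notin> C0'" for z unfolding Af'_def using Aop_supp[OF f' fz'] that C0'_def by simp
  have uz: "u y = 0" if "y \<notin> SS Sf Sf'" for y unfolding u_def using conv_supp[OF fz fz' that] .
  have Auz: "Au x = 0" if "x \<notin> E" for x
  proof -
    have "x \<notin> KSK (SS Sf Sf')"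
    proof
      assume "x \<in> KSK (SS Sf Sf')"
      then obtain k s s' k' where "k \<in> K" "s \<in> Sf" "s' \<in> Sf'" "k' \<in> K" "x = k + (s + s') + k'"
        unfolding KSK_def SS_def by auto
      moreover have "k + (s + s') + k' = (k + s + 0) + (0 + s' + k')" by (simp add: add.assoc)
      ultimately have "x \<in> SS C0 C0'" unfolding C0_def C0'_def using K0
        by (metis KSK_mem SS_mem)
      then show False using that E_def by simp
    qed
    then show ?thesis unfolding Au_def using Aop_supp[OF uc, of "SS Sf Sf'" x] uz by blast
  qed
  define cf where "cf = conv \<mu> Af Af'"
  have cf_eq: "cf x = (\<integral>z. Af z * Af' (- z + x) \<partial>M0)" for x
    unfolding cf_def M0_def by (rule conv_eq[OF cAf cAf' C0c Afz])
  have ccf: "continuous_on UNIV cf" unfolding cf_def by (rule conv_cont[OF cAf cAf' C0c Afz])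
  have cfz: "cf x = 0" if "x \<notin> E" for x unfolding cf_def using conv_supp[OF Afz Afz'] that E_def by simp
  define I' where "I' = (\<integral>x. Af' x * \<phi> x \<partial>\<mu>)"
  have Q: "(\<integral>w. Af' w * \<phi> (y + w) \<partial>\<mu>) = \<phi> y * I'" for y
  proof -
    define Qy where "Qy = (\<integral>w. Af' w * \<phi> (y + w) \<partial>\<mu>)"
    have cg: "continuous_on UNIV (\<lambda>w. Af' w * \<phi> (y + w))"
      by (intro continuous_intros cAf' cc[OF \<phi>c] cont_add)
    have cH: "continuous_on UNIV (\<lambda>p::'g\<times>'g. Af' (snd p) * \<phi> (y + fst p + snd p))"
      by (intro continuous_intros cc[OF cAf'] cc[OF \<phi>c] cont_add)
    have cHk: "continuous_on UNIV (\<lambda>w. Af' w * \<phi> (y + k + w))" for k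
      by (intro continuous_intros cAf' cc[OF \<phi>c] cont_add)
    have q1: "(\<integral>w. Af' w * \<phi> (y + k + w) \<partial>M0') = Qy" if k: "k \<in> K" for k
    proof -
      have "(\<integral>w. Af' w * \<phi> (y + k + w) \<partial>M0') = (\<integral>w. Af' w * \<phi> (y + k + w) \<partial>\<mu>)"
        unfolding M0'_def by (rule muC_int(2)[OF C0c' cHk, symmetric]) (simp add: Afz')
      also have "\<dots> = (\<integral>w. Af' (k + w) * \<phi> (y + (k + w)) \<partial>\<mu>)"
        using Aop_left[OF f' k] unfolding Af'_def by (simp add: add.assoc)
      also have "\<dots> = Qy" unfolding Qy_def
        by (rule mu_left[OF borel_measurable_continuous_onI[OF cg]])
      finally show ?thesis .
    qed
    have "Qy = (\<integral>k. Qy \<partial>N)" by simp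
    also have "\<dots> = (\<integral>k. (\<integral>w. Af' w * \<phi> (y + k + w) \<partial>M0') \<partial>N)"
    proof (rule conc_cong[OF NC])
      show "(\<lambda>k. \<integral>w. Af' w * \<phi> (y + k + w) \<partial>M0') \<in> borel_measurable borel"
        using borel_measurable_continuous_onI[OF conc_cont_param[OF M0' cH]] by simp
    qed (auto simp: q1)
    also have "\<dots> = (\<integral>w. (\<integral>k. Af' w * \<phi> (y + k + w) \<partial>N) \<partial>M0')"
      using conc_fubini[OF NC M0' cH] by simp
    also have "\<dots> = (\<integral>w. Af' w * (\<phi> y * \<phi> w) \<partial>M0')"
    proof -
      have "(\<integral>k. \<phi> (y + k + w) \<partial>N) = \<phi> y * \<phi> w" for w
      proof -
        have "continuous_on UNIV (\<lambda>k. \<phi> (y + k + w))" by (intro cc[OF \<phi>c] cont_add continuous_intros)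
        then show ?thesis using N_int[OF borel_measurable_continuous_onI] \<phi>sph by metis
      qed
      then show ?thesis by simp
    qed
    also have "\<dots> = \<phi> y * (\<integral>w. Af' w * \<phi> w \<partial>M0')"
    proof -
      have "Af' w * (\<phi> y * \<phi> w) = \<phi> y * (Af' w * \<phi> w)" for w by (simp add: mult_ac)
      then show ?thesis by (simp only: integral_mult_right_zero)
    qed
    also have "\<dots> = \<phi> y * I'"
    proof -
      have "continuous_on UNIV (\<lambda>w. Af' w * \<phi> w)" by (intro continuous_intros cAf' \<phi>c)
      then have "I' = (\<integral>w. Af' w * \<phi> w \<partial>M0')" unfolding I'_def M0'_def
        by (rule muC_int(2)[OF C0c']) (simp add: Afz')
      then show ?thesis by simp
    qed
    finally show ?thesis unfolding Qy_def .
  qed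
  have cAuphi: "continuous_on UNIV (\<lambda>x. Au x * \<phi> x)" by (intro continuous_intros cAu \<phi>c)
  have ccfphi: "continuous_on UNIV (\<lambda>x. cf x * \<phi> x)" by (intro continuous_intros ccf \<phi>c)
  have "(\<integral>x. Au x * \<phi> x \<partial>\<mu>) = (\<integral>x. Au x * \<phi> x \<partial>ME)"
    unfolding ME_def by (rule muC_int(2)[OF Ec cAuphi]) (simp add: Auz)
  also have "\<dots> \<le> (\<integral>x. cf x * \<phi> x \<partial>ME)"
  proof (rule conc_mono[OF ME cAuphi ccfphi])
    fix x
    have "Au x \<le> cf x" unfolding Au_def cf_def Af_def Af'_def u_def by (rule part1[OF f f' Sf fz Sf' fz'])
    then show "Au x * \<phi> x \<le> cf x * \<phi> x" using pos[of x] by (simp add: mult_right_mono)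
  qed
  also have "\<dots> = (\<integral>x. \<integral>z. Af z * Af' (- z + x) * \<phi> x \<partial>M0 \<partial>ME)"
    unfolding cf_eq by simp
  also have "\<dots> = (\<integral>z. \<integral>x. Af z * Af' (- z + x) * \<phi> x \<partial>ME \<partial>M0)"
  proof -
    have G: "continuous_on UNIV (\<lambda>p::'g\<times>'g. Af (snd p) * Af' (- snd p + fst p) * \<phi> (fst p))"
      by (intro continuous_intros cc[OF cAf] cc[OF cAf'] cc[OF \<phi>c] cont_add cont_minus)
    show ?thesis using conc_fubini[OF ME M0 G] by simp
  qed
  also have "\<dots> = (\<integral>z. Af z * (\<phi> z * I') \<partial>M0)"
  proof (rule conc_cong[OF M0])
    have G: "continuous_on UNIV (\<lambda>p::'g\<times>'g. Af (fst p) * Af' (- fst p + snd p) * \<phi> (snd p))"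
      by (intro continuous_intros cc[OF cAf] cc[OF cAf'] cc[OF \<phi>c] cont_add cont_minus)
    show "(\<lambda>z. \<integral>x. Af z * Af' (- z + x) * \<phi> x \<partial>ME) \<in> borel_measurable borel"
      using borel_measurable_continuous_onI[OF conc_cont_param[OF ME G]] by simp
    show "(\<lambda>z. Af z * (\<phi> z * I')) \<in> borel_measurable borel"
      by (intro borel_measurable_continuous_onI continuous_intros cAf \<phi>c)
    fix z assume z: "z \<in> C0"
    have cg: "continuous_on UNIV (\<lambda>x. Af' (- z + x) * \<phi> x)"
      by (intro continuous_intros cc[OF cAf'] \<phi>c cont_add cont_minus)
    have "(\<integral>x. Af' (- z + x) * \<phi> x \<partial>ME) = (\<integral>x. Af' (- z + x) * \<phi> x \<partial>\<mu>)"
      unfolding ME_def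
    proof (rule muC_int(2)[OF Ec cg, symmetric])
      fix x assume x: "x \<notin> E"
      show "Af' (- z + x) * \<phi> x = 0"
      proof (cases "- z + x \<in> C0'")
        case True
        then have "z + (- z + x) \<in> E" unfolding E_def using z by (rule SS_mem[rotated])
        then show ?thesis using x by (simp add: add.assoc[symmetric])
      qed (simp add: Afz')
    qed
    also have "\<dots> = (\<integral>w. Af' (- z + (z + w)) * \<phi> (z + w) \<partial>\<mu>)"
      by (rule mu_left[OF borel_measurable_continuous_onI[OF cg], symmetric])
    also have "\<dots> = \<phi> z * I'" using Q[of z] by (simp add: add.assoc[symmetric])
    finally have "(\<integral>x. Af' (- z + x) * \<phi> x \<partial>ME) = \<phi> z * I'" .
    moreover have "Af z * Af' (- z + x) * \<phi> x = Af z * (Af' (- z + x) * \<phi> x)" for x by (simp add: mult_ac)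
    ultimately show "(\<integral>x. Af z * Af' (- z + x) * \<phi> x \<partial>ME) = Af z * (\<phi> z * I')"
      by (simp only: integral_mult_right_zero)
  qed
  also have "\<dots> = I' * (\<integral>z. Af z * \<phi> z \<partial>M0)"
  proof -
    have "Af z * (\<phi> z * I') = I' * (Af z * \<phi> z)" for z by (simp add: mult_ac)
    then show ?thesis by (simp only: integral_mult_right_zero)
  qed
  also have "(\<integral>z. Af z * \<phi> z \<partial>M0) = (\<integral>z. Af z * \<phi> z \<partial>\<mu>)"
  proof -
    have "continuous_on UNIV (\<lambda>w. Af w * \<phi> w)" by (intro continuous_intros cAf \<phi>c)
    then show ?thesis unfolding M0_def
      by (rule muC_int(2)[OF C0c, symmetric]) (simp add: Afz)
  qed
  finally show ?thesis unfolding Au_def u_def I'_def Af_def Af'_def by (simp add: mult.commute)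
qed

end

theorem mainTheorem4:
  fixes \<mu> \<nu> :: "('g::{group_add,t2_space}) measure"
    and K :: "'g set"
    and f f' :: "'g \<Rightarrow> complex"
    and \<phi> :: "'g \<Rightarrow> real"
  assumes G_lc: "locally_compact_group TYPE('g)"
    and G_connected: "connected (UNIV :: 'g set)"
    and G_noncompact: "\<not> compact (UNIV :: 'g set)"
    and G_finite_centre: "finite (group_center :: 'g set)"
    and K_max: "maximal_compact_subgroup K"
    and haar: "unimodular_haar_measure \<mu>"
    and haarK: "normalized_haar_on K \<nu>"
    and f: "f \<in> Cc" and f': "f' \<in> Cc"
  shows "(\<forall>x. Aop \<nu> (conv \<mu> f f') x \<le> conv \<mu> (Aop \<nu> f) (Aop \<nu> f') x)
       \<and> ((spherical_function K \<nu> \<phi> \<and> (\<forall>x. \<phi> x > 0)) \<longrightarrow>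
            (\<integral>x. Aop \<nu> (conv \<mu> f f') x * \<phi> x \<partial>\<mu>)
              \<le> (\<integral>y. Aop \<nu> f y * \<phi> y \<partial>\<mu>) * (\<integral>x. Aop \<nu> f' x * \<phi> x \<partial>\<mu>))"
  proof -
  have tg: "topological_group TYPE('g)" using G_lc unfolding locally_compact_group_def by blast
  have Ksub: "is_subgroup K" and Kc: "compact K" using K_max unfolding maximal_compact_subgroup_def by auto
  interpret gsetting \<mu> \<nu> K
    using tg Ksub Kc haar haarK by (rule gsetting.intro)
  define Sf where "Sf = closure {x. f x \<noteq> 0}"
  define Sf' where "Sf' = closure {x. f' x \<noteq> 0}"
  have fc: "continuous_on UNIV f" and Sfc: "compact Sf" using f unfolding Cc_def Sf_def by auto
  have fc': "continuous_on UNIV f'" and Sfc': "compact Sf'" using f' unfolding Cc_def Sf'_def by auto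
  have fz: "f y = 0" if "y \<notin> Sf" for y using that closure_subset[of "{x. f x \<noteq> 0}"] unfolding Sf_def by auto
  have fz': "f' y = 0" if "y \<notin> Sf'" for y using that closure_subset[of "{x. f' x \<noteq> 0}"] unfolding Sf'_def by auto
  show ?thesis
  proof (intro conjI allI impI)
    fix x show "Aop \<nu> (conv \<mu> f f') x \<le> conv \<mu> (Aop \<nu> f) (Aop \<nu> f') x"
      by (rule part1[OF fc fc' Sfc fz Sfc' fz'])
  next
    assume "spherical_function K \<nu> \<phi> \<and> (\<forall>x. \<phi> x > 0)"
    then have sph: "spherical_function K \<nu> \<phi>" and pos: "\<And>x. \<phi> x > 0" by auto
    show "(\<integral>x. Aop \<nu> (conv \<mu> f f') x * \<phi> x \<partial>\<mu>)
              \<le> (\<integral>y. Aop \<nu> f y * \<phi> y \<partial>\<mu>) * (\<integral>x. Aop \<nu> f' x * \<phi> x \<partial>\<mu>)"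
      by (rule part2[OF fc fc' Sfc fz Sfc' fz' sph pos])
  qed
qed

end
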